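(* Consider the resource theory of unital maps on $\mathcal H_W\otimes\mathcal H_S$ with $d_W=\dim\mathcal H_W\ge d_S=\dim\mathcal H_S$, and a fixed orthonormal basis $\{\ket i_W\}$ of $\mathcal H_W$ with $\Pi^k_W=\sum_{i=1}^k\ket i\bra i_W$. Let $C^k=\{\sigma_{WS}\in\Omega:\mathrm{Tr}_S\sigma_{WS}=\Pi^k_W/k\}$ for $1\le k\le d_W$ and $\mathcal C=\{C^k\}_{k=1}^{d_W}\cup\{\Omega\}$. Let the target $\mathcal S$ consist of all specifications of the form $V=\{\sigma_{WS}\in\Omega:\mathrm{Tr}_W\sigma_{WS}\in V_S\}$ for some non-empty set $V_S$ of density operators on $\mathcal H_S$. Then $\mathcal C$ is a currency for $\mathcal S$ (with value function $\mathrm{Val}(C^k)=\log d_W-\log k$, $\mathrm{Val}(\Omega)=0$), and $\mathcal C$ is independent of $\mathcal S$.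
   Context: $\Omega$ is the set of all density operators on $\mathcal H_W\otimes\mathcal H_S$; specifications are non-empty subsets of $\Omega$. Allowed transformations: $f_{\mathcal E}(V)=\{\mathcal E(\rho):\rho\in V\}$ for unital CPTP maps $\mathcal E$ on $\mathcal H_W\otimes\mathcal H_S$; $V\to W$ iff some such $\mathcal E$ has $\mathcal E(\rho)\in W$ for all $\rho\in V$. Logarithms base 2. A subset $\mathcal C$ is a currency for target $\mathcal S$ if (Order) any two elements of $\mathcal C$ are comparable under $\to$ and $\Omega\in\mathcal C$; (Universality) $\Omega\in\mathcal S$ and every $V\in\mathcal S$ has $C,C'\in\mathcal C$ with $C\to V$, $V\to C'$. A value function $\mathrm{Val}:\mathcal C\to\mathbb R_{\ge0}$ satisfies $\mathrm{Val}(C')\ge\mathrm{Val}(C)\iff C'\to C$ and $\mathrm{Val}(\Omega)=0$. Independence: $C\cap V\neq\emptyset$ for all $C\in\mathcal C$, $V\in\mathcal S$, and $C\to C'$ implies $C\cap V\to C'\cap V$ for all $V\in\mathcal S$. *)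

theory Defs
  imports Complex_Main "Jordan_Normal_Form.Matrix"
begin

text \<open>Composite system H_W (dimension dW) tensor H_S (dimension dS), modelled by complex
  (dW*dS) x (dW*dS) matrices; the product basis vector |i>_W |s>_S has index i*dS + s.
  The fixed orthonormal basis of H_W is the computational basis.\<close>

definition cadj :: "complex mat \<Rightarrow> complex mat" where
  "cadj A = mat (dim_col A) (dim_row A) (\<lambda>(i,j). cnj (A $$ (j,i)))"

definition mtrace :: "complex mat \<Rightarrow> complex" where
  "mtrace A = (\<Sum>i<dim_row A. A $$ (i,i))"

definition density :: "nat \<Rightarrow> complex mat \<Rightarrow> bool" where
  "density n \<rho> \<longleftrightarrow> \<rho> \<in> carrier_mat n n \<and> cadj \<rho> = \<rho> \<and>
     (\<forall>v :: nat \<Rightarrow> complex.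
        (\<Sum>i<n. \<Sum>j<n. cnj (v i) * \<rho> $$ (i,j) * v j) \<in> \<real> \<and>
        Re (\<Sum>i<n. \<Sum>j<n. cnj (v i) * \<rho> $$ (i,j) * v j) \<ge> 0) \<and>
     mtrace \<rho> = 1"

definition Omega :: "nat \<Rightarrow> nat \<Rightarrow> complex mat set" where
  "Omega dW dS = {\<rho>. density (dW * dS) \<rho>}"

definition is_spec :: "nat \<Rightarrow> nat \<Rightarrow> complex mat set \<Rightarrow> bool" where
  "is_spec dW dS V \<longleftrightarrow> V \<noteq> {} \<and> V \<subseteq> Omega dW dS"

definition ptrace_S :: "nat \<Rightarrow> nat \<Rightarrow> complex mat \<Rightarrow> complex mat" where
  "ptrace_S dW dS \<sigma> = mat dW dW (\<lambda>(i,j). \<Sum>s<dS. \<sigma> $$ (i*dS + s, j*dS + s))"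

definition ptrace_W :: "nat \<Rightarrow> nat \<Rightarrow> complex mat \<Rightarrow> complex mat" where
  "ptrace_W dW dS \<sigma> = mat dS dS (\<lambda>(s,t). \<Sum>i<dW. \<sigma> $$ (i*dS + s, i*dS + t))"

text \<open>Unital CPTP maps on C^n, given by a (finite) Kraus representation
  E(rho) = sum_k K_k rho K_k^dagger with sum K_k^dagger K_k = 1 (trace preserving)
  and sum K_k K_k^dagger = 1 (unital).\<close>
definition kraus_apply :: "complex mat list \<Rightarrow> complex mat \<Rightarrow> complex mat" where
  "kraus_apply Ks \<rho> = foldr (\<lambda>K acc. K * \<rho> * cadj K + acc) Ks (0\<^sub>m (dim_row \<rho>) (dim_col \<rho>))"

definition unital_cptp :: "nat \<Rightarrow> (complex mat \<Rightarrow> complex mat) \<Rightarrow> bool" where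
  "unital_cptp n E \<longleftrightarrow> (\<exists>Ks. Ks \<noteq> [] \<and> (\<forall>K\<in>set Ks. K \<in> carrier_mat n n) \<and>
      foldr (\<lambda>K acc. cadj K * K + acc) Ks (0\<^sub>m n n) = 1\<^sub>m n \<and>
      foldr (\<lambda>K acc. K * cadj K + acc) Ks (0\<^sub>m n n) = 1\<^sub>m n \<and>
      (\<forall>\<rho> \<in> carrier_mat n n. E \<rho> = kraus_apply Ks \<rho>))"

definition reach :: "nat \<Rightarrow> nat \<Rightarrow> complex mat set \<Rightarrow> complex mat set \<Rightarrow> bool" where
  "reach dW dS V W \<longleftrightarrow> (\<exists>E. unital_cptp (dW * dS) E \<and> (\<forall>\<rho>\<in>V. E \<rho> \<in> W))"

definition is_currency :: "nat \<Rightarrow> nat \<Rightarrow> complex mat set set \<Rightarrow> complex mat set set \<Rightarrow> bool" where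
  "is_currency dW dS \<C> \<S> \<longleftrightarrow>
     (\<forall>X\<in>\<C>. is_spec dW dS X) \<and> (\<forall>V\<in>\<S>. is_spec dW dS V) \<and>
     (\<forall>X\<in>\<C>. \<forall>Y\<in>\<C>. reach dW dS X Y \<or> reach dW dS Y X) \<and> Omega dW dS \<in> \<C> \<and>
     Omega dW dS \<in> \<S> \<and>
     (\<forall>V\<in>\<S>. \<exists>X\<in>\<C>. \<exists>Y\<in>\<C>. reach dW dS X V \<and> reach dW dS V Y)"

definition is_value_function ::
  "nat \<Rightarrow> nat \<Rightarrow> complex mat set set \<Rightarrow> (complex mat set \<Rightarrow> real) \<Rightarrow> bool" where
  "is_value_function dW dS \<C> Val \<longleftrightarrow>
     (\<forall>X\<in>\<C>. Val X \<ge> 0) \<and>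
     (\<forall>X\<in>\<C>. \<forall>Y\<in>\<C>. Val Y \<ge> Val X \<longleftrightarrow> reach dW dS Y X) \<and>
     Val (Omega dW dS) = 0"

definition is_independent :: "nat \<Rightarrow> nat \<Rightarrow> complex mat set set \<Rightarrow> complex mat set set \<Rightarrow> bool" where
  "is_independent dW dS \<C> \<S> \<longleftrightarrow>
     (\<forall>X\<in>\<C>. \<forall>V\<in>\<S>. X \<inter> V \<noteq> {}) \<and>
     (\<forall>X\<in>\<C>. \<forall>Y\<in>\<C>. reach dW dS X Y \<longrightarrow> (\<forall>V\<in>\<S>. reach dW dS (X \<inter> V) (Y \<inter> V)))"

definition proj_norm :: "nat \<Rightarrow> nat \<Rightarrow> complex mat" where
  "proj_norm dW k = mat dW dW (\<lambda>(i,j). if i = j \<and> i < k then 1 / of_nat k else 0)"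

definition currency_set :: "nat \<Rightarrow> nat \<Rightarrow> nat \<Rightarrow> complex mat set" where
  "currency_set dW dS k = {\<sigma> \<in> Omega dW dS. ptrace_S dW dS \<sigma> = proj_norm dW k}"

definition currency_family :: "nat \<Rightarrow> nat \<Rightarrow> complex mat set set" where
  "currency_family dW dS = (currency_set dW dS ` {1..dW}) \<union> {Omega dW dS}"

definition target_family :: "nat \<Rightarrow> nat \<Rightarrow> complex mat set set" where
  "target_family dW dS = {{\<sigma> \<in> Omega dW dS. ptrace_W dW dS \<sigma> \<in> VS} | VS.
       VS \<noteq> {} \<and> (\<forall>\<tau>\<in>VS. density dS \<tau>)}"

end

theory Submission
  imports Defs
begin

lemma sum_shift_ivl: "sum f {a..<a+n} = (\<Sum>s<n. f (a+s::nat))"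
  by (induction n) (auto simp: algebra_simps)

lemma sum_split_mult: "(\<Sum>x<m*n. f x) = (\<Sum>i<m. \<Sum>s<n. f (i*n+s::nat))"
proof -
  have "(\<Sum>x<m*n. f x) = (\<Sum>i<m. sum f {i*n..<i*n+n})" by (simp add: sum.nat_group)
  also have "... = (\<Sum>i<m. \<Sum>s<n. f (i*n+s))"
  proof (rule sum.cong[OF refl])
    fix i show "sum f {i*n..<i*n+n} = (\<Sum>s<n. f (i*n+s))"
      by (rule sum_shift_ivl)
  qed
  finally show ?thesis .
qed

lemma divmod_simps[simp]:
  assumes "s < (n::nat)" shows "(i*n+s) div n = i" "(i*n+s) mod n = s"
  using assms by auto

lemma foldr_entry:
  assumes "\<forall>K\<in>set Ks. F K \<in> carrier_mat n n"
  shows "foldr (\<lambda>K acc. F K + acc) Ks (0\<^sub>m n n) \<in> carrier_mat n n \<and>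
   (\<forall>x<n. \<forall>y<n. foldr (\<lambda>K acc. F K + acc) Ks (0\<^sub>m n n) $$ (x,y) = (\<Sum>k<length Ks. F (Ks!k) $$ (x,y)))"
  using assms
proof (induction Ks)
  case Nil then show ?case by auto
next
  case (Cons K Ks)
  then show ?case by (auto simp del: sum.lessThan_Suc simp: sum.lessThan_Suc_shift)
qed

lemma cadj_carrier[simp]: "K \<in> carrier_mat n m \<Longrightarrow> cadj K \<in> carrier_mat m n"
  by (auto simp: cadj_def)

lemma cadj_entry[simp]: "i < dim_col K \<Longrightarrow> j < dim_row K \<Longrightarrow> cadj K $$ (i,j) = cnj (K $$ (j,i))"
  by (auto simp: cadj_def)

lemma cadj_dims[simp]: "dim_row (cadj K) = dim_col K" "dim_col (cadj K) = dim_row K"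
  by (auto simp: cadj_def)

lemma sandwich_entry:
  assumes "K \<in> carrier_mat n n" "\<rho> \<in> carrier_mat n n" "x < n" "y < n"
  shows "(K * \<rho> * cadj K) $$ (x,y) = (\<Sum>c<n. \<Sum>d<n. K $$ (x,c) * \<rho> $$ (c,d) * cnj (K $$ (y,d)))"
proof -
  have "(K * \<rho> * cadj K) $$ (x,y) = (\<Sum>d<n. (K*\<rho>) $$ (x,d) * cnj (K $$ (y,d)))"
    using assms by (simp add: scalar_prod_def atLeast0LessThan)
  also have "... = (\<Sum>d<n. (\<Sum>c<n. K $$ (x,c) * \<rho> $$ (c,d)) * cnj (K $$ (y,d)))"
    using assms by (simp add: scalar_prod_def atLeast0LessThan)
  also have "... = (\<Sum>c<n. \<Sum>d<n. K $$ (x,c) * \<rho> $$ (c,d) * cnj (K $$ (y,d)))"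
    by (simp add: sum_distrib_right) (rule sum.swap)
  finally show ?thesis .
qed

lemma cadjK_K_entry:
  assumes "K \<in> carrier_mat n n" "x < n" "y < n"
  shows "(cadj K * K) $$ (x,y) = (\<Sum>a<n. cnj (K $$ (a,x)) * K $$ (a,y))"
  using assms by (simp add: scalar_prod_def atLeast0LessThan)

lemma K_cadjK_entry:
  assumes "K \<in> carrier_mat n n" "x < n" "y < n"
  shows "(K * cadj K) $$ (x,y) = (\<Sum>a<n. K $$ (x,a) * cnj (K $$ (y,a)))"
  using assms by (simp add: scalar_prod_def atLeast0LessThan)

definition qf :: "nat \<Rightarrow> (nat \<Rightarrow> nat \<Rightarrow> complex) \<Rightarrow> (nat \<Rightarrow> complex) \<Rightarrow> complex" where
  "qf n f v = (\<Sum>i<n. \<Sum>j<n. cnj (v i) * f i j * v j)"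

lemma qf_sum: "qf n (\<lambda>i j. \<Sum>k\<in>A. f k i j) v = (\<Sum>k\<in>A. qf n (f k) v)"
proof -
  have "qf n (\<lambda>i j. \<Sum>k\<in>A. f k i j) v = (\<Sum>i<n. \<Sum>j<n. \<Sum>k\<in>A. cnj (v i) * f k i j * v j)"
    unfolding qf_def by (simp add: sum_distrib_left sum_distrib_right)
  also have "... = (\<Sum>i<n. \<Sum>k\<in>A. \<Sum>j<n. cnj (v i) * f k i j * v j)"
    by (rule sum.cong[OF refl], rule sum.swap)
  also have "... = (\<Sum>k\<in>A. \<Sum>i<n. \<Sum>j<n. cnj (v i) * f k i j * v j)"
    by (rule sum.swap)
  finally show ?thesis unfolding qf_def .
qed

lemma qf_sandwich:
  "qf n (\<lambda>x y. \<Sum>c<n. \<Sum>d<n. K x c * r c d * cnj (K y d)) v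
   = qf n r (\<lambda>c. \<Sum>y<n. cnj (K y c) * v y)"
proof -
  have "qf n (\<lambda>x y. \<Sum>c<n. \<Sum>d<n. K x c * r c d * cnj (K y d)) v
     = (\<Sum>x<n. \<Sum>y<n. \<Sum>c<n. \<Sum>d<n. cnj (v x) * K x c * r c d * cnj (K y d) * v y)"
    unfolding qf_def by (simp add: sum_distrib_left sum_distrib_right mult.assoc)
  also have "... = (\<Sum>x<n. \<Sum>c<n. \<Sum>y<n. \<Sum>d<n. cnj (v x) * K x c * r c d * cnj (K y d) * v y)"
    by (rule sum.cong[OF refl], rule sum.swap)
  also have "... = (\<Sum>c<n. \<Sum>x<n. \<Sum>y<n. \<Sum>d<n. cnj (v x) * K x c * r c d * cnj (K y d) * v y)"
    by (rule sum.swap)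
  also have "... = (\<Sum>c<n. \<Sum>x<n. \<Sum>d<n. \<Sum>y<n. cnj (v x) * K x c * r c d * cnj (K y d) * v y)"
    by (rule sum.cong[OF refl], rule sum.cong[OF refl], rule sum.swap)
  also have "... = (\<Sum>c<n. \<Sum>d<n. \<Sum>x<n. \<Sum>y<n. cnj (v x) * K x c * r c d * cnj (K y d) * v y)"
    by (rule sum.cong[OF refl], rule sum.swap)
  also have "... = qf n r (\<lambda>c. \<Sum>y<n. cnj (K y c) * v y)"
    unfolding qf_def by (simp add: sum_distrib_left sum_distrib_right mult_ac)
  finally show ?thesis .
qed

lemma qf_real_herm:
  assumes "\<forall>i<n. \<forall>j<n. cnj (f j i) = f i j"
  shows "qf n f v \<in> \<real>"
proof -
  have "cnj (qf n f v) = (\<Sum>i<n. \<Sum>j<n. v i * cnj (f i j) * cnj (v j))"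
    unfolding qf_def by simp
  also have "... = (\<Sum>i<n. \<Sum>j<n. v i * f j i * cnj (v j))"
    using assms by (intro sum.cong refl) (metis complex_cnj_cnj lessThan_iff)
  also have "... = (\<Sum>j<n. \<Sum>i<n. v i * f j i * cnj (v j))"
    by (rule sum.swap)
  also have "... = qf n f v" unfolding qf_def by (simp add: mult_ac)
  finally show ?thesis using Reals_cnj_iff by blast
qed

lemma herm_iff:
  assumes "\<rho> \<in> carrier_mat n n"
  shows "cadj \<rho> = \<rho> \<longleftrightarrow> (\<forall>i<n. \<forall>j<n. cnj (\<rho> $$ (j,i)) = \<rho> $$ (i,j))"
proof
  assume h: "cadj \<rho> = \<rho>"
  show "\<forall>i<n. \<forall>j<n. cnj (\<rho> $$ (j,i)) = \<rho> $$ (i,j)"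
  proof (intro allI impI)
    fix i j assume "i < n" "j < n"
    then have "cadj \<rho> $$ (i,j) = cnj (\<rho> $$ (j,i))" using assms by simp
    then show "cnj (\<rho> $$ (j,i)) = \<rho> $$ (i,j)" using h by simp
  qed
next
  assume "\<forall>i<n. \<forall>j<n. cnj (\<rho> $$ (j,i)) = \<rho> $$ (i,j)"
  then show "cadj \<rho> = \<rho>" using assms by (intro eq_matI) auto
qed

lemma density_iff:
  "density n \<rho> \<longleftrightarrow> \<rho> \<in> carrier_mat n n \<and> (\<forall>i<n. \<forall>j<n. cnj (\<rho> $$ (j,i)) = \<rho> $$ (i,j)) \<and>
     (\<forall>v. Re (qf n (\<lambda>i j. \<rho> $$ (i,j)) v) \<ge> 0) \<and> (\<Sum>i<n. \<rho> $$ (i,i)) = 1"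
proof
  assume d: "density n \<rho>"
  then have c: "\<rho> \<in> carrier_mat n n" unfolding density_def by auto
  with d show "\<rho> \<in> carrier_mat n n \<and> (\<forall>i<n. \<forall>j<n. cnj (\<rho> $$ (j,i)) = \<rho> $$ (i,j)) \<and>
     (\<forall>v. Re (qf n (\<lambda>i j. \<rho> $$ (i,j)) v) \<ge> 0) \<and> (\<Sum>i<n. \<rho> $$ (i,i)) = 1"
    unfolding density_def qf_def mtrace_def herm_iff[OF c] by auto
next
  assume a: "\<rho> \<in> carrier_mat n n \<and> (\<forall>i<n. \<forall>j<n. cnj (\<rho> $$ (j,i)) = \<rho> $$ (i,j)) \<and>
     (\<forall>v. Re (qf n (\<lambda>i j. \<rho> $$ (i,j)) v) \<ge> 0) \<and> (\<Sum>i<n. \<rho> $$ (i,i)) = 1"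
  then have c: "\<rho> \<in> carrier_mat n n" by auto
  have "qf n (\<lambda>i j. \<rho> $$ (i,j)) v \<in> \<real>" for v using a by (intro qf_real_herm) auto
  with a c show "density n \<rho>"
    unfolding density_def qf_def mtrace_def herm_iff[OF c] by auto
qed

lemma sand_carrier: "K \<in> carrier_mat n n \<Longrightarrow> \<rho> \<in> carrier_mat n n \<Longrightarrow> K * \<rho> * cadj K \<in> carrier_mat n n"
  by (metis cadj_carrier mult_carrier_mat)
lemma KK_carrier: "K \<in> carrier_mat n n \<Longrightarrow> cadj K * K \<in> carrier_mat n n \<and> K * cadj K \<in> carrier_mat n n"
  by (metis cadj_carrier mult_carrier_mat)

definition TPc :: "nat \<Rightarrow> complex mat list \<Rightarrow> bool" where
  "TPc n Ks \<longleftrightarrow> (\<forall>c<n. \<forall>d<n. (\<Sum>k<length Ks. \<Sum>a<n. cnj (Ks!k $$ (a,d)) * Ks!k $$ (a,c)) = (if d = c then 1 else 0))"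

definition UNc :: "nat \<Rightarrow> complex mat list \<Rightarrow> bool" where
  "UNc n Ks \<longleftrightarrow> (\<forall>x<n. \<forall>y<n. (\<Sum>k<length Ks. \<Sum>a<n. Ks!k $$ (x,a) * cnj (Ks!k $$ (y,a))) = (if x = y then 1 else 0))"

lemma kraus_entry:
  assumes "\<forall>K\<in>set Ks. K \<in> carrier_mat n n" "\<rho> \<in> carrier_mat n n"
  shows "kraus_apply Ks \<rho> \<in> carrier_mat n n"
    "\<And>x y. x < n \<Longrightarrow> y < n \<Longrightarrow> kraus_apply Ks \<rho> $$ (x,y) =
       (\<Sum>k<length Ks. \<Sum>c<n. \<Sum>d<n. Ks!k $$ (x,c) * \<rho> $$ (c,d) * cnj (Ks!k $$ (y,d)))"
proof -
  have dims: "dim_row \<rho> = n" "dim_col \<rho> = n" using assms by auto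
  have F: "\<forall>K\<in>set Ks. K * \<rho> * cadj K \<in> carrier_mat n n" using assms sand_carrier by auto
  note fe = foldr_entry[OF F]
  show "kraus_apply Ks \<rho> \<in> carrier_mat n n" using fe unfolding kraus_apply_def dims by auto
  fix x y assume xy: "x < n" "y < n"
  have "kraus_apply Ks \<rho> $$ (x,y) = (\<Sum>k<length Ks. (Ks!k * \<rho> * cadj (Ks!k)) $$ (x,y))"
    using fe xy unfolding kraus_apply_def dims by auto
  also have "... = (\<Sum>k<length Ks. \<Sum>c<n. \<Sum>d<n. Ks!k $$ (x,c) * \<rho> $$ (c,d) * cnj (Ks!k $$ (y,d)))"
    using assms xy by (intro sum.cong refl sandwich_entry) auto
  finally show "kraus_apply Ks \<rho> $$ (x,y) =
       (\<Sum>k<length Ks. \<Sum>c<n. \<Sum>d<n. Ks!k $$ (x,c) * \<rho> $$ (c,d) * cnj (Ks!k $$ (y,d)))" .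
qed

lemma unital_cptpI:
  assumes "Ks \<noteq> []" "\<forall>K\<in>set Ks. K \<in> carrier_mat n n" "TPc n Ks" "UNc n Ks"
  shows "unital_cptp n (kraus_apply Ks)"
proof -
  have F1: "\<forall>K\<in>set Ks. cadj K * K \<in> carrier_mat n n" using assms KK_carrier by auto
  have F2: "\<forall>K\<in>set Ks. K * cadj K \<in> carrier_mat n n" using assms KK_carrier by auto
  note f1 = foldr_entry[OF F1] and f2 = foldr_entry[OF F2]
  have e1: "foldr (\<lambda>K acc. cadj K * K + acc) Ks (0\<^sub>m n n) = 1\<^sub>m n"
  proof (rule eq_matI)
    fix i j assume ij: "i < dim_row (1\<^sub>m n)" "j < dim_col (1\<^sub>m n)"
    then have "foldr (\<lambda>K acc. cadj K * K + acc) Ks (0\<^sub>m n n) $$ (i,j)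
        = (\<Sum>k<length Ks. \<Sum>a<n. cnj (Ks!k $$ (a,i)) * Ks!k $$ (a,j))"
      using f1 assms(2) by (auto intro!: sum.cong cadjK_K_entry)
    also have "... = 1\<^sub>m n $$ (i,j)" using assms(3) ij unfolding TPc_def by auto
    finally show "foldr (\<lambda>K acc. cadj K * K + acc) Ks (0\<^sub>m n n) $$ (i,j) = 1\<^sub>m n $$ (i,j)" .
  qed (use f1 in auto)
  have e2: "foldr (\<lambda>K acc. K * cadj K + acc) Ks (0\<^sub>m n n) = 1\<^sub>m n"
  proof (rule eq_matI)
    fix i j assume ij: "i < dim_row (1\<^sub>m n)" "j < dim_col (1\<^sub>m n)"
    then have "foldr (\<lambda>K acc. K * cadj K + acc) Ks (0\<^sub>m n n) $$ (i,j)
        = (\<Sum>k<length Ks. \<Sum>a<n. Ks!k $$ (i,a) * cnj (Ks!k $$ (j,a)))"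
      using f2 assms(2) by (auto intro!: sum.cong K_cadjK_entry)
    also have "... = 1\<^sub>m n $$ (i,j)" using assms(4) ij unfolding UNc_def by auto
    finally show "foldr (\<lambda>K acc. K * cadj K + acc) Ks (0\<^sub>m n n) $$ (i,j) = 1\<^sub>m n $$ (i,j)" .
  qed (use f2 in auto)
  show ?thesis unfolding unital_cptp_def using assms e1 e2 by blast
qed

lemma unital_cptpD:
  assumes "unital_cptp n E"
  obtains Ks where "\<forall>K\<in>set Ks. K \<in> carrier_mat n n" "TPc n Ks" "UNc n Ks"
    "\<forall>\<rho>\<in>carrier_mat n n. E \<rho> = kraus_apply Ks \<rho>"
proof -
  obtain Ks where K: "Ks \<noteq> []" "\<forall>K\<in>set Ks. K \<in> carrier_mat n n"
    "foldr (\<lambda>K acc. cadj K * K + acc) Ks (0\<^sub>m n n) = 1\<^sub>m n"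
    "foldr (\<lambda>K acc. K * cadj K + acc) Ks (0\<^sub>m n n) = 1\<^sub>m n"
    "\<forall>\<rho> \<in> carrier_mat n n. E \<rho> = kraus_apply Ks \<rho>"
    using assms unfolding unital_cptp_def by blast
  have F1: "\<forall>K\<in>set Ks. cadj K * K \<in> carrier_mat n n" using K KK_carrier by auto
  have F2: "\<forall>K\<in>set Ks. K * cadj K \<in> carrier_mat n n" using K KK_carrier by auto
  note f1 = foldr_entry[OF F1] and f2 = foldr_entry[OF F2]
  have "TPc n Ks" unfolding TPc_def
  proof (intro allI impI)
    fix c d assume cd: "c < n" "d < n"
    have "(\<Sum>k<length Ks. \<Sum>a<n. cnj (Ks!k $$ (a,d)) * Ks!k $$ (a,c))
        = foldr (\<lambda>K acc. cadj K * K + acc) Ks (0\<^sub>m n n) $$ (d,c)"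
      using f1 K(2) cd by (auto intro!: sum.cong cadjK_K_entry[symmetric])
    then show "(\<Sum>k<length Ks. \<Sum>a<n. cnj (Ks!k $$ (a,d)) * Ks!k $$ (a,c)) = (if d = c then 1 else 0)"
      using K(3) cd by auto
  qed
  moreover have "UNc n Ks" unfolding UNc_def
  proof (intro allI impI)
    fix x y assume cd: "x < n" "y < n"
    have "(\<Sum>k<length Ks. \<Sum>a<n. Ks!k $$ (x,a) * cnj (Ks!k $$ (y,a)))
        = foldr (\<lambda>K acc. K * cadj K + acc) Ks (0\<^sub>m n n) $$ (x,y)"
      using f2 K(2) cd by (auto intro!: sum.cong K_cadjK_entry[symmetric])
    then show "(\<Sum>k<length Ks. \<Sum>a<n. Ks!k $$ (x,a) * cnj (Ks!k $$ (y,a))) = (if x = y then 1 else 0)"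
      using K(4) cd by auto
  qed
  ultimately show ?thesis using that K by blast
qed

lemma qf_cong: "(\<And>i j. i < n \<Longrightarrow> j < n \<Longrightarrow> f i j = g i j) \<Longrightarrow> qf n f v = qf n g v"
  unfolding qf_def by (intro sum.cong refl) auto

lemma kraus_density:
  assumes K: "\<forall>K\<in>set Ks. K \<in> carrier_mat n n" and tp: "TPc n Ks" and d: "density n \<rho>"
  shows "density n (kraus_apply Ks \<rho>)"
proof -
  have dd: "\<rho> \<in> carrier_mat n n" "\<forall>i<n. \<forall>j<n. cnj (\<rho> $$ (j,i)) = \<rho> $$ (i,j)"
     "\<forall>v. Re (qf n (\<lambda>i j. \<rho> $$ (i,j)) v) \<ge> 0" "(\<Sum>i<n. \<rho> $$ (i,i)) = 1"
    using d unfolding density_iff by auto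
  note ke = kraus_entry[OF K dd(1)]
  define E where "E = kraus_apply Ks \<rho>"
  define L where "L = length Ks"
  let ?K = "\<lambda>k x c. Ks!k $$ (x,c)"
  let ?r = "\<lambda>c d. \<rho> $$ (c,d)"
  have Ee: "E $$ (x,y) = (\<Sum>k<L. \<Sum>c<n. \<Sum>d<n. ?K k x c * ?r c d * cnj (?K k y d))" if "x<n" "y<n" for x y
    using ke(2)[OF that] unfolding E_def L_def .
  have herm: "\<forall>i<n. \<forall>j<n. cnj (E $$ (j,i)) = E $$ (i,j)"
  proof (intro allI impI)
    fix i j assume ij: "i < n" "j < n"
    have "cnj (E $$ (j,i)) = (\<Sum>k<L. \<Sum>c<n. \<Sum>d<n. cnj (?K k j c) * cnj (?r c d) * ?K k i d)"
      using Ee[OF ij(2) ij(1)] by simp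
    also have "... = (\<Sum>k<L. \<Sum>c<n. \<Sum>d<n. ?K k i d * ?r d c * cnj (?K k j c))"
      using dd(2) by (intro sum.cong refl) (simp add: mult_ac)
    also have "... = (\<Sum>k<L. \<Sum>d<n. \<Sum>c<n. ?K k i d * ?r d c * cnj (?K k j c))"
      by (intro sum.cong refl sum.swap)
    also have "... = E $$ (i,j)" using Ee[OF ij] by simp
    finally show "cnj (E $$ (j,i)) = E $$ (i,j)" .
  qed
  have psd: "Re (qf n (\<lambda>i j. E $$ (i,j)) v) \<ge> 0" for v
  proof -
    have "qf n (\<lambda>i j. E $$ (i,j)) v = qf n (\<lambda>i j. \<Sum>k<L. \<Sum>c<n. \<Sum>d<n. ?K k i c * ?r c d * cnj (?K k j d)) v"
      by (rule qf_cong) (simp add: Ee)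
    also have "... = (\<Sum>k<L. qf n (\<lambda>i j. \<Sum>c<n. \<Sum>d<n. ?K k i c * ?r c d * cnj (?K k j d)) v)"
      by (rule qf_sum)
    also have "... = (\<Sum>k<L. qf n ?r (\<lambda>c. \<Sum>y<n. cnj (?K k y c) * v y))"
      by (intro sum.cong refl qf_sandwich)
    finally have "Re (qf n (\<lambda>i j. E $$ (i,j)) v) = (\<Sum>k<L. Re (qf n ?r (\<lambda>c. \<Sum>y<n. cnj (?K k y c) * v y)))"
      by simp
    also have "... \<ge> 0" using dd(3) by (intro sum_nonneg) auto
    finally show ?thesis .
  qed
  have tr: "(\<Sum>x<n. E $$ (x,x)) = 1"
  proof -
    have "(\<Sum>x<n. E $$ (x,x)) = (\<Sum>x<n. \<Sum>k<L. \<Sum>c<n. \<Sum>d<n. ?K k x c * ?r c d * cnj (?K k x d))"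
      by (simp add: Ee)
    also have "... = (\<Sum>k<L. \<Sum>x<n. \<Sum>c<n. \<Sum>d<n. ?K k x c * ?r c d * cnj (?K k x d))"
      by (rule sum.swap)
    also have "... = (\<Sum>k<L. \<Sum>c<n. \<Sum>x<n. \<Sum>d<n. ?K k x c * ?r c d * cnj (?K k x d))"
      by (intro sum.cong refl sum.swap)
    also have "... = (\<Sum>k<L. \<Sum>c<n. \<Sum>d<n. \<Sum>x<n. ?K k x c * ?r c d * cnj (?K k x d))"
      by (intro sum.cong refl sum.swap)
    also have "... = (\<Sum>c<n. \<Sum>k<L. \<Sum>d<n. \<Sum>x<n. ?K k x c * ?r c d * cnj (?K k x d))"
      by (rule sum.swap)
    also have "... = (\<Sum>c<n. \<Sum>d<n. \<Sum>k<L. \<Sum>x<n. ?K k x c * ?r c d * cnj (?K k x d))"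
      by (intro sum.cong refl sum.swap)
    also have "... = (\<Sum>c<n. \<Sum>d<n. ?r c d * (\<Sum>k<L. \<Sum>x<n. cnj (?K k x d) * ?K k x c))"
      by (simp add: sum_distrib_left mult_ac)
    also have "... = (\<Sum>c<n. \<Sum>d<n. ?r c d * (if d = c then 1 else 0))"
      using tp unfolding TPc_def L_def by (intro sum.cong refl) auto
    also have "... = (\<Sum>c<n. ?r c c)"
      by (simp add: if_distrib cong: if_cong) 
    finally show ?thesis using dd(4) by simp
  qed
  show ?thesis unfolding density_iff E_def[symmetric] using ke(1) herm psd tr E_def by auto
qed

lemma Re_sand: "Re (a * r * cnj a) = (cmod a)^2 * Re r"
proof -
  have "(cmod a)^2 = (Re a)^2 + (Im a)^2" by (rule cmod_power2)
  then show ?thesis by (simp add: algebra_simps power2_eq_square)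
qed

lemma Re_mcnj: "Re (a * cnj a) = (cmod a)^2"
  using Re_sand[of a 1] by simp

lemma diag_bound:
  assumes K: "\<forall>K\<in>set Ks. K \<in> carrier_mat n n" and un: "UNc n Ks" and r: "\<rho> \<in> carrier_mat n n"
    and diag: "\<forall>c<n. \<forall>d<n. c \<noteq> d \<longrightarrow> \<rho> $$ (c,d) = 0"
    and bd: "\<forall>c<n. Re (\<rho> $$ (c,c)) \<le> l" and x: "x < n"
  shows "Re (kraus_apply Ks \<rho> $$ (x,x)) \<le> l"
proof -
  define L where "L = length Ks"
  let ?K = "\<lambda>k x c. Ks!k $$ (x,c)"
  let ?r = "\<lambda>c d. \<rho> $$ (c,d)"
  have "kraus_apply Ks \<rho> $$ (x,x) = (\<Sum>k<L. \<Sum>c<n. \<Sum>d<n. ?K k x c * ?r c d * cnj (?K k x d))"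
    using kraus_entry(2)[OF K r x x] unfolding L_def .
  also have "... = (\<Sum>k<L. \<Sum>c<n. \<Sum>d<n. if d = c then ?K k x c * ?r c c * cnj (?K k x c) else 0)"
    using diag by (intro sum.cong refl) auto
  also have "... = (\<Sum>k<L. \<Sum>c<n. ?K k x c * ?r c c * cnj (?K k x c))"
    by simp
  finally have e: "Re (kraus_apply Ks \<rho> $$ (x,x)) = (\<Sum>k<L. \<Sum>c<n. (cmod (?K k x c))\<^sup>2 * Re (?r c c))"
    by (simp only: Re_sum Re_sand)
  also have "... \<le> (\<Sum>k<L. \<Sum>c<n. (cmod (?K k x c))\<^sup>2 * l)"
    using bd by (intro sum_mono mult_left_mono) auto
  also have "... = l * Re (\<Sum>k<L. \<Sum>c<n. ?K k x c * cnj (?K k x c))"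
    by (simp only: Re_sum Re_mcnj sum_distrib_left mult.commute)
  also have "... = l" using un x unfolding UNc_def L_def by auto
  finally show ?thesis .
qed

lemma idx_lt: "i < m \<Longrightarrow> s < n \<Longrightarrow> i*n+s < m*(n::nat)"
proof -
  assume a: "i < m" "s < n"
  have "i*n + s < (i+1)*n" using a by simp
  also have "(i+1)*n \<le> m*n" using a by (intro mult_le_mono1) simp
  finally show ?thesis .
qed

lemma qf_split: "qf (m*n) f v = (\<Sum>i<m. \<Sum>j<m. \<Sum>s<n. \<Sum>t<n.
    cnj (v (i*n+s)) * f (i*n+s) (j*n+t) * v (j*n+t))"
proof -
  have "qf (m*n) f v = (\<Sum>i<m. \<Sum>s<n. \<Sum>j<m. \<Sum>t<n. cnj (v (i*n+s)) * f (i*n+s) (j*n+t) * v (j*n+t))"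
    unfolding qf_def by (simp add: sum_split_mult)
  also have "... = (\<Sum>i<m. \<Sum>j<m. \<Sum>s<n. \<Sum>t<n. cnj (v (i*n+s)) * f (i*n+s) (j*n+t) * v (j*n+t))"
    by (intro sum.cong refl sum.swap)
  finally show ?thesis .
qed

lemma sum_if_less: "k \<le> m \<Longrightarrow> (\<Sum>i<m. if i < k then c else 0) = of_nat k * (c::'a::comm_semiring_1)"
proof -
  assume "k \<le> m"
  then have "{..<m} \<inter> {i. i < k} = {..<k}" by auto
  then have "(\<Sum>i<m. if i < k then c else 0) = (\<Sum>i<k. c)"
    using sum.inter_restrict[of "{..<m}" "\<lambda>_. c" "{i. i<k}"] by simp
  then show ?thesis by simp
qed

definition tens :: "nat \<Rightarrow> nat \<Rightarrow> nat \<Rightarrow> complex mat \<Rightarrow> complex mat" where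
  "tens dW dS k \<tau> = mat (dW*dS) (dW*dS) (\<lambda>(x,y). if x div dS = y div dS \<and> x div dS < k
      then \<tau> $$ (x mod dS, y mod dS) / of_nat k else 0)"

definition mixS :: "nat \<Rightarrow> complex mat" where
  "mixS dS = mat dS dS (\<lambda>(s,t). if s = t then 1 / of_nat dS else 0)"

lemma mcnj_aux: "cnj a * a = complex_of_real ((cmod a)^2)"
  by (metis complex_norm_square mult.commute of_real_power)

lemma Re_cnj_div_nonneg: "0 \<le> Re (cnj a * a / of_nat n)"
proof -
  have "cnj a * a / of_nat n = complex_of_real ((cmod a)^2 / real n)"
    by (simp add: mcnj_aux)
  then show ?thesis by simp
qed

lemma mixS_density: "0 < dS \<Longrightarrow> density dS (mixS dS)"
proof -
  assume d: "0 < dS"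
  have row: "(\<Sum>j<dS. cnj (v i) * mixS dS $$ (i,j) * v j) = cnj (v i) * v i / of_nat dS" if "i < dS" for v i
  proof -
    have "(\<Sum>j<dS. cnj (v i) * mixS dS $$ (i,j) * v j) = (\<Sum>j<dS. if j = i then cnj (v i) * v i / of_nat dS else 0)"
      using that by (intro sum.cong refl) (auto simp: mixS_def)
    then show ?thesis using that by simp
  qed
  have "Re (qf dS (\<lambda>i j. mixS dS $$ (i,j)) v) \<ge> 0" for v
    unfolding qf_def using row by (simp add: Re_sum sum_nonneg Re_cnj_div_nonneg)
  moreover have "(\<Sum>i<dS. mixS dS $$ (i,i)) = 1" using d unfolding mixS_def by simp
  ultimately show ?thesis unfolding density_iff mixS_def by auto
qed

lemma sum_delta2: "finite A \<Longrightarrow> i \<in> A \<Longrightarrow> (\<Sum>a\<in>A. \<Sum>b\<in>A. if a = i \<and> b = i then X else 0) = X"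
proof -
  assume f: "finite A" "i \<in> A"
  have "(\<Sum>b\<in>A. if a = i \<and> b = i then X else 0) = (if a = i then X else 0)" for a
    using f by (cases "a = i") simp_all
  then show ?thesis using f by simp
qed

lemma tens_entry:
  assumes "i < dW" "j < dW" "s < dS" "t < dS"
  shows "tens dW dS k \<tau> $$ (i*dS+s, j*dS+t) = (if i = j \<and> i < k then \<tau> $$ (s,t) / of_nat k else 0)"
  using assms idx_lt[of i dW s dS] idx_lt[of j dW t dS] unfolding tens_def by simp

lemma tens_density:
  assumes dS: "0 < dS" and k: "1 \<le> k" "k \<le> dW" and d: "density dS \<tau>"
  shows "density (dW*dS) (tens dW dS k \<tau>)"
proof -
  have dd: "\<tau> \<in> carrier_mat dS dS" "\<forall>i<dS. \<forall>j<dS. cnj (\<tau> $$ (j,i)) = \<tau> $$ (i,j)"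
     "\<forall>v. Re (qf dS (\<lambda>i j. \<tau> $$ (i,j)) v) \<ge> 0" "(\<Sum>i<dS. \<tau> $$ (i,i)) = 1"
    using d unfolding density_iff by auto
  let ?T = "tens dW dS k \<tau>"
  have c: "?T \<in> carrier_mat (dW*dS) (dW*dS)" unfolding tens_def by simp
  have herm: "\<forall>x<dW*dS. \<forall>y<dW*dS. cnj (?T $$ (y,x)) = ?T $$ (x,y)"
    using dd(2) dS unfolding tens_def by auto
  have tr: "(\<Sum>x<dW*dS. ?T $$ (x,x)) = 1"
  proof -
    have "(\<Sum>x<dW*dS. ?T $$ (x,x)) = (\<Sum>i<dW. \<Sum>s<dS. ?T $$ (i*dS+s, i*dS+s))"
      by (rule sum_split_mult)
    also have "... = (\<Sum>i<dW. \<Sum>s<dS. if i < k then \<tau> $$ (s,s) / of_nat k else 0)"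
      by (intro sum.cong refl) (simp add: tens_entry)
    also have "... = (\<Sum>i<dW. if i < k then 1 / of_nat k else 0)"
      using dd(4) by (intro sum.cong refl) (simp add: sum_divide_distrib[symmetric])
    also have "... = 1" using k by (simp add: sum_if_less)
    finally show ?thesis .
  qed
  have psd: "Re (qf (dW*dS) (\<lambda>x y. ?T $$ (x,y)) v) \<ge> 0" for v
  proof -
    have inner: "(\<Sum>s<dS. \<Sum>t<dS. cnj (v (i*dS+s)) * ?T $$ (i*dS+s, j*dS+t) * v (j*dS+t))
       = (if i = j then (if i < k then qf dS (\<lambda>s t. \<tau> $$ (s,t)) (\<lambda>s. v (i*dS+s)) / of_nat k else 0) else 0)"
      if "i < dW" "j < dW" for i j
      using that unfolding qf_def
      by (auto simp: tens_entry sum_divide_distrib)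
    have "qf (dW*dS) (\<lambda>x y. ?T $$ (x,y)) v
       = (\<Sum>i<dW. \<Sum>j<dW. if i = j then (if i < k then qf dS (\<lambda>s t. \<tau> $$ (s,t)) (\<lambda>s. v (i*dS+s)) / of_nat k else 0) else 0)"
      unfolding qf_split by (intro sum.cong refl inner) auto
    also have "... = (\<Sum>i<dW. if i < k then qf dS (\<lambda>s t. \<tau> $$ (s,t)) (\<lambda>s. v (i*dS+s)) / of_nat k else 0)"
      by simp
    finally have "Re (qf (dW*dS) (\<lambda>x y. ?T $$ (x,y)) v) =
        (\<Sum>i<dW. if i < k then Re (qf dS (\<lambda>s t. \<tau> $$ (s,t)) (\<lambda>s. v (i*dS+s))) / real k else 0)"
      by (simp add: Re_sum if_distrib cong: if_cong)
    also have "... \<ge> 0" using dd(3) by (intro sum_nonneg) auto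
    finally show ?thesis .
  qed
  show ?thesis unfolding density_iff using c herm tr psd by auto
qed

lemma ptrace_S_tens:
  assumes dS: "0 < dS" and k: "1 \<le> k" "k \<le> dW" and d: "density dS \<tau>"
  shows "ptrace_S dW dS (tens dW dS k \<tau>) = proj_norm dW k"
proof -
  have tr: "(\<Sum>i<dS. \<tau> $$ (i,i)) = 1" using d unfolding density_iff by auto
  show ?thesis
  proof (rule eq_matI)
    fix i j assume ij: "i < dim_row (proj_norm dW k)" "j < dim_col (proj_norm dW k)"
    then have ij': "i < dW" "j < dW" unfolding proj_norm_def by auto
    have "ptrace_S dW dS (tens dW dS k \<tau>) $$ (i,j) = (\<Sum>s<dS. tens dW dS k \<tau> $$ (i*dS+s, j*dS+s))"
      unfolding ptrace_S_def using ij' by simp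
    also have "... = (\<Sum>s<dS. if i = j \<and> i < k then \<tau> $$ (s,s) / of_nat k else 0)"
      using ij' by (intro sum.cong refl) (simp add: tens_entry)
    also have "... = proj_norm dW k $$ (i,j)"
      using ij' tr unfolding proj_norm_def by (cases "i = j"; cases "i < k") (simp_all add: sum_divide_distrib[symmetric])
    finally show "ptrace_S dW dS (tens dW dS k \<tau>) $$ (i,j) = proj_norm dW k $$ (i,j)" .
  qed (auto simp: ptrace_S_def proj_norm_def)
qed

lemma ptrace_W_tens:
  assumes dS: "0 < dS" and k: "1 \<le> k" "k \<le> dW" and d: "density dS \<tau>"
  shows "ptrace_W dW dS (tens dW dS k \<tau>) = \<tau>"
proof -
  have c: "\<tau> \<in> carrier_mat dS dS" using d unfolding density_iff by auto
  show ?thesis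
  proof (rule eq_matI)
    fix s t assume st: "s < dim_row \<tau>" "t < dim_col \<tau>"
    then have st': "s < dS" "t < dS" using c by auto
    have "ptrace_W dW dS (tens dW dS k \<tau>) $$ (s,t) = (\<Sum>i<dW. tens dW dS k \<tau> $$ (i*dS+s, i*dS+t))"
      unfolding ptrace_W_def using st' by simp
    also have "... = (\<Sum>i<dW. if i < k then \<tau> $$ (s,t) / of_nat k else 0)"
      using st' by (intro sum.cong refl) (simp add: tens_entry)
    also have "... = \<tau> $$ (s,t)" using k by (simp add: sum_if_less)
    finally show "ptrace_W dW dS (tens dW dS k \<tau>) $$ (s,t) = \<tau> $$ (s,t)" .
  qed (use c in \<open>auto simp: ptrace_W_def\<close>)
qed

lemma ptrace_W_density:
  assumes dS: "0 < dS" and d: "density (dW*dS) \<sigma>"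
  shows "density dS (ptrace_W dW dS \<sigma>)"
proof -
  have dd: "\<sigma> \<in> carrier_mat (dW*dS) (dW*dS)" "\<forall>i<dW*dS. \<forall>j<dW*dS. cnj (\<sigma> $$ (j,i)) = \<sigma> $$ (i,j)"
     "\<forall>v. Re (qf (dW*dS) (\<lambda>i j. \<sigma> $$ (i,j)) v) \<ge> 0" "(\<Sum>i<dW*dS. \<sigma> $$ (i,i)) = 1"
    using d unfolding density_iff by auto
  let ?P = "ptrace_W dW dS \<sigma>"
  have e: "?P $$ (s,t) = (\<Sum>i<dW. \<sigma> $$ (i*dS+s, i*dS+t))" if "s < dS" "t < dS" for s t
    using that unfolding ptrace_W_def by simp
  have c: "?P \<in> carrier_mat dS dS" unfolding ptrace_W_def by simp
  have herm: "\<forall>s<dS. \<forall>t<dS. cnj (?P $$ (t,s)) = ?P $$ (s,t)"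
    using dd(2) idx_lt[of _ dW _ dS] by (auto simp: e intro!: sum.cong)
  have tr: "(\<Sum>s<dS. ?P $$ (s,s)) = 1"
  proof -
    have "(\<Sum>s<dS. ?P $$ (s,s)) = (\<Sum>s<dS. \<Sum>i<dW. \<sigma> $$ (i*dS+s, i*dS+s))" by (simp add: e)
    also have "... = (\<Sum>i<dW. \<Sum>s<dS. \<sigma> $$ (i*dS+s, i*dS+s))" by (rule sum.swap)
    also have "... = 1" using dd(4) by (simp add: sum_split_mult)
    finally show ?thesis .
  qed
  have psd: "Re (qf dS (\<lambda>s t. ?P $$ (s,t)) v) \<ge> 0" for v
  proof -
    define w where "w i x = (if x div dS = i then v (x mod dS) else 0)" for i x
    have q: "qf (dW*dS) (\<lambda>x y. \<sigma> $$ (x,y)) (w i) = (\<Sum>s<dS. \<Sum>t<dS. cnj (v s) * \<sigma> $$ (i*dS+s, i*dS+t) * v t)"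
      if "i < dW" for i
    proof -
      have inner: "(\<Sum>s<dS. \<Sum>t<dS. cnj (w i (i'*dS+s)) * \<sigma> $$ (i'*dS+s, j'*dS+t) * w i (j'*dS+t))
        = (if i' = i \<and> j' = i then (\<Sum>s<dS. \<Sum>t<dS. cnj (v s) * \<sigma> $$ (i*dS+s, i*dS+t) * v t) else 0)"
        for i' j' unfolding w_def by (auto intro!: sum.cong)
      show ?thesis unfolding qf_split inner using that by (simp add: sum_delta2)
    qed
    have "qf dS (\<lambda>s t. ?P $$ (s,t)) v = (\<Sum>s<dS. \<Sum>t<dS. \<Sum>i<dW. cnj (v s) * \<sigma> $$ (i*dS+s, i*dS+t) * v t)"
      unfolding qf_def by (intro sum.cong refl) (simp add: e sum_distrib_left sum_distrib_right)
    also have "... = (\<Sum>s<dS. \<Sum>i<dW. \<Sum>t<dS. cnj (v s) * \<sigma> $$ (i*dS+s, i*dS+t) * v t)"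
      by (intro sum.cong refl sum.swap)
    also have "... = (\<Sum>i<dW. \<Sum>s<dS. \<Sum>t<dS. cnj (v s) * \<sigma> $$ (i*dS+s, i*dS+t) * v t)"
      by (rule sum.swap)
    also have "... = (\<Sum>i<dW. qf (dW*dS) (\<lambda>x y. \<sigma> $$ (x,y)) (w i))"
      by (intro sum.cong refl) (simp add: q)
    finally have "Re (qf dS (\<lambda>s t. ?P $$ (s,t)) v) = (\<Sum>i<dW. Re (qf (dW*dS) (\<lambda>x y. \<sigma> $$ (x,y)) (w i)))"
      by (simp add: Re_sum)
    also have "... \<ge> 0" using dd(3) by (intro sum_nonneg) auto
    finally show ?thesis .
  qed
  show ?thesis unfolding density_iff using c herm tr psd by auto
qed

lemma sum_if_less2: "k \<le> (m::nat) \<Longrightarrow> (\<Sum>i<m. if i < k then f i else 0) = (\<Sum>i<k. f i)"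
proof -
  assume "k \<le> m"
  then have "{..<m} \<inter> {i. i < k} = {..<k}" by auto
  then show ?thesis
    using sum.inter_restrict[of "{..<m}" f "{i. i<k}"] by simp
qed

lemma idx_decomp: "0 < (dS::nat) \<Longrightarrow> ((c::nat) = (j::nat)*dS + (m::nat) \<and> m < dS) \<longleftrightarrow> (c div dS = j \<and> c mod dS = m)"
  by (metis div_mult_mod_eq divmod_simps mult.commute mod_less_divisor)

lemma div_lt: "x < dW*dS \<Longrightarrow> x div dS < (dW::nat)"
  by (simp add: less_mult_imp_div_less)

lemma sum_block_delta:
  assumes "0 < (dS::nat)" "(i::nat) < dW" "(m::nat) < dS"
  shows "(\<Sum>a<dW*dS. if a div dS = i \<and> a mod dS = m then h else 0) = h"
proof -
  have "(\<Sum>a<dW*dS. if a div dS = i \<and> a mod dS = m then h else 0) = (\<Sum>a<dW*dS. if a = i*dS+m then h else 0)"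
    using assms idx_decomp[of dS _ i m] by (intro sum.cong refl) auto
  also have "... = h" using idx_lt[OF assms(2,3)] by simp
  finally show ?thesis .
qed

lemma mult_delta: "a * (if P then 1 else 0) = (if P then a else (0::complex))"
   "(if P then 1 else 0) * a = (if P then a else (0::complex))"
   "cnj (if P then 1 else 0) = (if P then 1 else 0)"
  by simp_all

lemma id_TP: "TPc n [1\<^sub>m n]"
  unfolding TPc_def
proof (intro allI impI)
  fix c d assume cd: "c < n" "d < n"
  have "(\<Sum>a<n. cnj (1\<^sub>m n $$ (a,d)) * 1\<^sub>m n $$ (a,c)) = (\<Sum>a<n. if a = d then (if d = c then 1 else 0) else 0)"
    using cd by (intro sum.cong refl) auto
  then show "(\<Sum>k<length [1\<^sub>m n]. \<Sum>a<n. cnj ([1\<^sub>m n]!k $$ (a,d)) * [1\<^sub>m n]!k $$ (a,c)) = (if d = c then 1 else 0)"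
    using cd by simp
qed

lemma id_UN: "UNc n [1\<^sub>m n]"
  unfolding UNc_def
proof (intro allI impI)
  fix x y assume cd: "x < n" "y < n"
  have "(\<Sum>a<n. 1\<^sub>m n $$ (x,a) * cnj (1\<^sub>m n $$ (y,a))) = (\<Sum>a<n. if a = x then (if x = y then 1 else 0) else 0)"
    using cd by (intro sum.cong refl) auto
  then show "(\<Sum>k<length [1\<^sub>m n]. \<Sum>a<n. [1\<^sub>m n]!k $$ (x,a) * cnj ([1\<^sub>m n]!k $$ (y,a))) = (if x = y then 1 else 0)"
    using cd by simp
qed

lemma id_apply: "\<rho> \<in> carrier_mat n n \<Longrightarrow> kraus_apply [1\<^sub>m n] \<rho> = \<rho>"
proof -
  assume r: "\<rho> \<in> carrier_mat n n"
  have K: "\<forall>K\<in>set [1\<^sub>m n]. K \<in> carrier_mat n n" by auto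
  note ke = kraus_entry[OF K r]
  show ?thesis
  proof (rule eq_matI)
    fix x y assume "x < dim_row \<rho>" "y < dim_col \<rho>"
    then have xy: "x < n" "y < n" using r by auto
    show "kraus_apply [1\<^sub>m n] \<rho> $$ (x,y) = \<rho> $$ (x,y)"
      unfolding ke(2)[OF xy] using xy by (simp add: mult_delta cong: if_cong)
  qed (use ke(1) r in auto)
qed

lemma id_unital: "unital_cptp n (kraus_apply [1\<^sub>m n])"
  by (rule unital_cptpI) (auto simp: id_TP id_UN)

lemma reach_subset:
  assumes "X \<subseteq> Y" "X \<subseteq> Omega dW dS"
  shows "reach dW dS X Y"
proof -
  have "\<forall>\<rho>\<in>X. kraus_apply [1\<^sub>m (dW*dS)] \<rho> \<in> Y"
  proof
    fix \<rho> assume r: "\<rho> \<in> X"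
    then have "\<rho> \<in> carrier_mat (dW*dS) (dW*dS)" using assms(2) unfolding Omega_def density_def by auto
    then show "kraus_apply [1\<^sub>m (dW*dS)] \<rho> \<in> Y" using id_apply r assms(1) by auto
  qed
  then show ?thesis unfolding reach_def using id_unital by blast
qed

definition kap :: "nat \<Rightarrow> complex" where "kap k = complex_of_real (1 / sqrt (real k))"

lemma kap_sq: "0 < k \<Longrightarrow> kap k * cnj (kap k) = 1 / of_nat k"
  unfolding kap_def by (simp flip: of_real_mult)

definition Gop :: "nat \<Rightarrow> nat \<Rightarrow> nat \<Rightarrow> nat \<Rightarrow> nat \<Rightarrow> complex mat" where
  "Gop dW dS k i j = mat (dW*dS) (dW*dS) (\<lambda>(x,c). if x div dS = i \<and> c div dS = j \<and> x mod dS = c mod dS then kap k else 0)"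

definition Qop :: "nat \<Rightarrow> nat \<Rightarrow> nat \<Rightarrow> complex mat" where
  "Qop dW dS k = mat (dW*dS) (dW*dS) (\<lambda>(x,c). if k \<le> x div dS \<and> c = x then 1 else 0)"

definition GKs :: "nat \<Rightarrow> nat \<Rightarrow> nat \<Rightarrow> complex mat list" where
  "GKs dW dS k = map (\<lambda>l. Gop dW dS k (l div k) (l mod k)) [0..<k*k] @ [Qop dW dS k]"

lemma GKs_carrier: "\<forall>K\<in>set (GKs dW dS k). K \<in> carrier_mat (dW*dS) (dW*dS)"
  unfolding GKs_def Gop_def Qop_def by auto

lemma GKs_sum: "(\<Sum>l<length (GKs dW dS k). F (GKs dW dS k ! l)) =
   (\<Sum>i<k. \<Sum>j<k. F (Gop dW dS k i j)) + F (Qop dW dS k)"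
proof -
  have len: "length (GKs dW dS k) = Suc (k*k)" unfolding GKs_def by simp
  have "(\<Sum>l<length (GKs dW dS k). F (GKs dW dS k ! l)) = (\<Sum>l<k*k. F (GKs dW dS k ! l)) + F (GKs dW dS k ! (k*k))"
    unfolding len by simp
  also have "(\<Sum>l<k*k. F (GKs dW dS k ! l)) = (\<Sum>i<k. \<Sum>j<k. F (GKs dW dS k ! (i*k+j)))"
    by (rule sum_split_mult)
  also have "... = (\<Sum>i<k. \<Sum>j<k. F (Gop dW dS k i j))"
  proof (intro sum.cong refl)
    fix i j assume "i \<in> {..<k}" "j \<in> {..<k}"
    then have "i*k+j < k*k" using idx_lt[of i k j k] by simp
    then show "F (GKs dW dS k ! (i*k+j)) = F (Gop dW dS k i j)"
      unfolding GKs_def using \<open>j \<in> {..<k}\<close> by (simp add: nth_append)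
  qed
  also have "GKs dW dS k ! (k*k) = Qop dW dS k" unfolding GKs_def by (simp add: nth_append)
  finally show ?thesis .
qed

lemma Gop_entry: "x < dW*dS \<Longrightarrow> c < dW*dS \<Longrightarrow> Gop dW dS k i j $$ (x,c) =
   (if x div dS = i \<and> c div dS = j \<and> x mod dS = c mod dS then kap k else 0)"
  unfolding Gop_def by simp

lemma Qop_entry: "x < dW*dS \<Longrightarrow> c < dW*dS \<Longrightarrow> Qop dW dS k $$ (x,c) =
   (if k \<le> x div dS \<and> c = x then 1 else 0)"
  unfolding Qop_def by simp

lemma kap_sq': "0 < k \<Longrightarrow> cnj (kap k) * kap k = 1 / of_nat k"
  using kap_sq[of k] by (simp add: mult.commute)

lemma sum_const_if: "(\<Sum>i<k. if C then c else 0) = (if C then of_nat k * c else 0)"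
  by simp

lemma sum_delta_pair:
  assumes "finite A" "finite B" "X \<in> A" "Y \<in> B"
  shows "(\<Sum>c\<in>A. \<Sum>d\<in>B. if c = X \<and> d = Y then F c d else 0) = F X Y"
proof -
  have "(\<Sum>d\<in>B. if c = X \<and> d = Y then F c d else 0) = (if c = X then F c Y else 0)" for c
    using assms by (cases "c = X") simp_all
  then show ?thesis using assms by simp
qed

context
  fixes dW dS k :: nat
  assumes dS: "0 < dS" and k1: "1 \<le> k" and kW: "k \<le> dW"
begin

lemma k0: "0 < k" using k1 by simp

lemma G_TP_inner:
  assumes "i < k" "j < k" "c < dW*dS" "d < dW*dS"
  shows "(\<Sum>a<dW*dS. cnj (Gop dW dS k i j $$ (a,d)) * Gop dW dS k i j $$ (a,c)) =
     (if d div dS = j \<and> c div dS = j \<and> c mod dS = d mod dS then 1 / of_nat k else 0)"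
proof -
  have "(\<Sum>a<dW*dS. cnj (Gop dW dS k i j $$ (a,d)) * Gop dW dS k i j $$ (a,c)) =
     (\<Sum>a<dW*dS. if d div dS = j \<and> c div dS = j \<and> c mod dS = d mod dS then
        (if a div dS = i \<and> a mod dS = d mod dS then 1 / of_nat k else 0) else 0)"
    using assms by (intro sum.cong refl) (auto simp: Gop_entry kap_sq'[OF k0])
  also have "... = (if d div dS = j \<and> c div dS = j \<and> c mod dS = d mod dS then 1 / of_nat k else 0)"
    using sum_block_delta[OF dS, of i dW "d mod dS" "1 / of_nat k"] assms kW dS by auto
  finally show ?thesis .
qed

lemma G_UN_inner:
  assumes "i < k" "j < k" "x < dW*dS" "y < dW*dS"
  shows "(\<Sum>a<dW*dS. Gop dW dS k i j $$ (x,a) * cnj (Gop dW dS k i j $$ (y,a))) =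
     (if x div dS = i \<and> y div dS = i \<and> x mod dS = y mod dS then 1 / of_nat k else 0)"
proof -
  have "(\<Sum>a<dW*dS. Gop dW dS k i j $$ (x,a) * cnj (Gop dW dS k i j $$ (y,a))) =
     (\<Sum>a<dW*dS. if x div dS = i \<and> y div dS = i \<and> x mod dS = y mod dS then
        (if a div dS = j \<and> a mod dS = x mod dS then 1 / of_nat k else 0) else 0)"
    using assms by (intro sum.cong refl) (auto simp: Gop_entry kap_sq[OF k0])
  also have "... = (if x div dS = i \<and> y div dS = i \<and> x mod dS = y mod dS then 1 / of_nat k else 0)"
    using sum_block_delta[OF dS, of j dW "x mod dS" "1 / of_nat k"] assms kW dS by auto
  finally show ?thesis .
qed

lemma G_TP: "TPc (dW*dS) (GKs dW dS k)"
  unfolding TPc_def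
proof (intro allI impI)
  fix c d assume cd: "c < dW*dS" "d < dW*dS"
  have Q: "(\<Sum>a<dW*dS. cnj (Qop dW dS k $$ (a,d)) * Qop dW dS k $$ (a,c)) =
      (\<Sum>a<dW*dS. if a = d then (if d = c \<and> k \<le> d div dS then 1 else 0) else 0)"
    using cd by (intro sum.cong refl) (auto simp: Qop_entry)
  have "(\<Sum>i<k. \<Sum>j<k. \<Sum>a<dW*dS. cnj (Gop dW dS k i j $$ (a,d)) * Gop dW dS k i j $$ (a,c))
     = (\<Sum>i<k. \<Sum>j<k. if j = d div dS then (if c div dS = d div dS \<and> c mod dS = d mod dS then 1 / of_nat k else 0) else 0)"
    using cd by (intro sum.cong refl) (auto simp: G_TP_inner)
  also have "... = (if d div dS < k \<and> c div dS = d div dS \<and> c mod dS = d mod dS then 1 else 0)"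
    using k0 by simp
  finally have G: "(\<Sum>i<k. \<Sum>j<k. \<Sum>a<dW*dS. cnj (Gop dW dS k i j $$ (a,d)) * Gop dW dS k i j $$ (a,c))
     = (if d div dS < k \<and> c div dS = d div dS \<and> c mod dS = d mod dS then 1 else 0)" .
  have ceq: "(c div dS = d div dS \<and> c mod dS = d mod dS) \<longleftrightarrow> c = d"
    by (metis div_mult_mod_eq)
  show "(\<Sum>l<length (GKs dW dS k). \<Sum>a<dW*dS. cnj (GKs dW dS k ! l $$ (a,d)) * GKs dW dS k ! l $$ (a,c))
      = (if d = c then 1 else 0)"
    unfolding GKs_sum[of "\<lambda>K. \<Sum>a<dW*dS. cnj (K $$ (a,d)) * K $$ (a,c)"] G Q using cd ceq by auto
qed

lemma G_UN: "UNc (dW*dS) (GKs dW dS k)"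
  unfolding UNc_def
proof (intro allI impI)
  fix x y assume xy: "x < dW*dS" "y < dW*dS"
  have Q: "(\<Sum>a<dW*dS. Qop dW dS k $$ (x,a) * cnj (Qop dW dS k $$ (y,a))) =
      (\<Sum>a<dW*dS. if a = x then (if x = y \<and> k \<le> x div dS then 1 else 0) else 0)"
    using xy by (intro sum.cong refl) (auto simp: Qop_entry)
  have "(\<Sum>i<k. \<Sum>j<k. \<Sum>a<dW*dS. Gop dW dS k i j $$ (x,a) * cnj (Gop dW dS k i j $$ (y,a)))
     = (\<Sum>i<k. if i = x div dS then (\<Sum>j<k. if y div dS = x div dS \<and> x mod dS = y mod dS then 1 / of_nat k else 0) else 0)"
    using xy by (intro sum.cong refl) (auto simp: G_UN_inner)
  also have "... = (if x div dS < k \<and> y div dS = x div dS \<and> x mod dS = y mod dS then 1 else 0)"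
    using k0 by simp
  finally have G: "(\<Sum>i<k. \<Sum>j<k. \<Sum>a<dW*dS. Gop dW dS k i j $$ (x,a) * cnj (Gop dW dS k i j $$ (y,a)))
     = (if x div dS < k \<and> y div dS = x div dS \<and> x mod dS = y mod dS then 1 else 0)" .
  have ceq: "(y div dS = x div dS \<and> x mod dS = y mod dS) \<longleftrightarrow> x = y"
    by (metis div_mult_mod_eq)
  show "(\<Sum>l<length (GKs dW dS k). \<Sum>a<dW*dS. GKs dW dS k ! l $$ (x,a) * cnj (GKs dW dS k ! l $$ (y,a)))
      = (if x = y then 1 else 0)"
    unfolding GKs_sum[of "\<lambda>K. \<Sum>a<dW*dS. K $$ (x,a) * cnj (K $$ (y,a))"] G Q using xy ceq by auto
qed

lemma G_unital: "unital_cptp (dW*dS) (kraus_apply (GKs dW dS k))"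
  by (rule unital_cptpI) (auto simp: G_TP G_UN GKs_carrier, simp add: GKs_def)

lemma G_out:
  assumes s: "\<sigma> \<in> carrier_mat (dW*dS) (dW*dS)" and xy: "x < dW*dS" "y < dW*dS"
  shows "kraus_apply (GKs dW dS k) \<sigma> $$ (x,y) =
    (if x div dS = y div dS \<and> x div dS < k then (\<Sum>j<k. \<sigma> $$ (j*dS + x mod dS, j*dS + y mod dS)) / of_nat k else 0)
    + (if k \<le> x div dS \<and> k \<le> y div dS then \<sigma> $$ (x,y) else 0)"
proof -
  have xm: "x mod dS < dS" "y mod dS < dS" using dS by auto
  have Gi: "(\<Sum>c<dW*dS. \<Sum>d<dW*dS. Gop dW dS k i j $$ (x,c) * \<sigma> $$ (c,d) * cnj (Gop dW dS k i j $$ (y,d)))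
      = (if x div dS = i \<and> y div dS = i then \<sigma> $$ (j*dS + x mod dS, j*dS + y mod dS) / of_nat k else 0)"
    if ij: "i < k" "j < k" for i j
  proof -
    have jl: "j*dS + x mod dS < dW*dS" "j*dS + y mod dS < dW*dS"
      using idx_lt[of j dW "x mod dS" dS] idx_lt[of j dW "y mod dS" dS] ij kW xm by auto
    have P: "Gop dW dS k i j $$ (x,c) * \<sigma> $$ (c,d) * cnj (Gop dW dS k i j $$ (y,d)) =
         (if c = j*dS + x mod dS \<and> d = j*dS + y mod dS then
           (if x div dS = i \<and> y div dS = i then \<sigma> $$ (c,d) / of_nat k else 0) else 0)"
      if cd: "c \<in> {..<dW*dS}" "d \<in> {..<dW*dS}" for c d
    proof -
      have e1: "(c div dS = j \<and> x mod dS = c mod dS) \<longleftrightarrow> c = j*dS + x mod dS"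
        using idx_decomp[OF dS, of c j "x mod dS"] xm by auto
      have e2: "(d div dS = j \<and> y mod dS = d mod dS) \<longleftrightarrow> d = j*dS + y mod dS"
        using idx_decomp[OF dS, of d j "y mod dS"] xm by auto
      have g1: "Gop dW dS k i j $$ (x,c) = (if c = j*dS + x mod dS \<and> x div dS = i then kap k else 0)"
        using Gop_entry[OF xy(1)] cd e1 by auto
      have g2: "Gop dW dS k i j $$ (y,d) = (if d = j*dS + y mod dS \<and> y div dS = i then kap k else 0)"
        using Gop_entry[OF xy(2)] cd e2 by auto
      have ks: "kap k * \<sigma> $$ (c,d) * cnj (kap k) = \<sigma> $$ (c,d) / of_nat k"
      proof -
        have "kap k * \<sigma> $$ (c,d) * cnj (kap k) = \<sigma> $$ (c,d) * (kap k * cnj (kap k))" by (simp add: mult_ac)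
        then show ?thesis using kap_sq[OF k0] by simp
      qed
      show ?thesis unfolding g1 g2 using ks by auto
    qed
    have "(\<Sum>c<dW*dS. \<Sum>d<dW*dS. Gop dW dS k i j $$ (x,c) * \<sigma> $$ (c,d) * cnj (Gop dW dS k i j $$ (y,d)))
      = (\<Sum>c<dW*dS. \<Sum>d<dW*dS. if c = j*dS + x mod dS \<and> d = j*dS + y mod dS then
           (if x div dS = i \<and> y div dS = i then \<sigma> $$ (c,d) / of_nat k else 0) else 0)"
      by (intro sum.cong refl P)
    also have "... = (if x div dS = i \<and> y div dS = i then \<sigma> $$ (j*dS + x mod dS, j*dS + y mod dS) / of_nat k else 0)"
      using jl by (subst sum_delta_pair) auto
    finally show ?thesis .
  qed
  have Qp: "(\<Sum>c<dW*dS. \<Sum>d<dW*dS. Qop dW dS k $$ (x,c) * \<sigma> $$ (c,d) * cnj (Qop dW dS k $$ (y,d)))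
      = (\<Sum>c<dW*dS. \<Sum>d<dW*dS. if c = x \<and> d = y then (if k \<le> x div dS \<and> k \<le> y div dS then \<sigma> $$ (c,d) else 0) else 0)"
    using xy by (intro sum.cong refl) (auto simp: Qop_entry)
  also have "... = (if k \<le> x div dS \<and> k \<le> y div dS then \<sigma> $$ (x,y) else 0)"
    using xy by (subst sum_delta_pair) auto
  finally have Qp: "(\<Sum>c<dW*dS. \<Sum>d<dW*dS. Qop dW dS k $$ (x,c) * \<sigma> $$ (c,d) * cnj (Qop dW dS k $$ (y,d)))
      = (if k \<le> x div dS \<and> k \<le> y div dS then \<sigma> $$ (x,y) else 0)" .
  have "kraus_apply (GKs dW dS k) \<sigma> $$ (x,y) =
     (\<Sum>i<k. \<Sum>j<k. if x div dS = i \<and> y div dS = i then \<sigma> $$ (j*dS + x mod dS, j*dS + y mod dS) / of_nat k else 0)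
     + (if k \<le> x div dS \<and> k \<le> y div dS then \<sigma> $$ (x,y) else 0)"
    unfolding kraus_entry(2)[OF GKs_carrier s xy]
      GKs_sum[of "\<lambda>K. \<Sum>c<dW*dS. \<Sum>d<dW*dS. K $$ (x,c) * \<sigma> $$ (c,d) * cnj (K $$ (y,d))"] Qp
    by (simp add: Gi)
  also have "(\<Sum>i<k. \<Sum>j<k. if x div dS = i \<and> y div dS = i then \<sigma> $$ (j*dS + x mod dS, j*dS + y mod dS) / of_nat k else 0)
     = (\<Sum>i<k. if i = x div dS then (if y div dS = x div dS then (\<Sum>j<k. \<sigma> $$ (j*dS + x mod dS, j*dS + y mod dS)) / of_nat k else 0) else 0)"
    by (intro sum.cong refl) (auto simp: sum_divide_distrib)
  also have "... = (if x div dS = y div dS \<and> x div dS < k then (\<Sum>j<k. \<sigma> $$ (j*dS + x mod dS, j*dS + y mod dS)) / of_nat k else 0)"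
    by auto
  finally show ?thesis .
qed

end

lemma ptS_entry: "i < dW \<Longrightarrow> j < dW \<Longrightarrow> ptrace_S dW dS \<sigma> $$ (i,j) = (\<Sum>s<dS. \<sigma> $$ (i*dS + s, j*dS + s))"
  unfolding ptrace_S_def by simp

lemma ptW_entry: "s < dS \<Longrightarrow> t < dS \<Longrightarrow> ptrace_W dW dS \<sigma> $$ (s,t) = (\<Sum>i<dW. \<sigma> $$ (i*dS + s, i*dS + t))"
  unfolding ptrace_W_def by simp

lemma sum_split_at: "k \<le> (m::nat) \<Longrightarrow> (\<Sum>i<m. f i) = (\<Sum>i<k. f i) + (\<Sum>i<m. if k \<le> i then f i else 0)"
proof -
  assume km: "k \<le> m"
  have "(\<Sum>i<m. f i) = (\<Sum>i<m. (if i < k then f i else 0) + (if k \<le> i then f i else 0))"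
    by (intro sum.cong refl) auto
  also have "... = (\<Sum>i<m. if i < k then f i else 0) + (\<Sum>i<m. if k \<le> i then f i else 0)"
    by (rule sum.distrib)
  finally show ?thesis by (simp only: sum_if_less2[OF km])
qed

lemma sum_if_cond: "(\<Sum>x\<in>A. if C then f x else 0) = (if C then (\<Sum>x\<in>A. f x) else 0)"
  by (cases C) simp_all

context
  fixes dW dS k :: nat
  assumes dS: "0 < dS" and k1: "1 \<le> k" and kW: "k \<le> dW"
begin

lemma G_ptS:
  assumes s: "\<sigma> \<in> carrier_mat (dW*dS) (dW*dS)"
    and t1: "(\<Sum>j<k. ptrace_S dW dS \<sigma> $$ (j,j)) = 1"
    and z: "\<forall>i<dW. \<forall>i'<dW. k \<le> i \<longrightarrow> k \<le> i' \<longrightarrow> ptrace_S dW dS \<sigma> $$ (i,i') = 0"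
  shows "ptrace_S dW dS (kraus_apply (GKs dW dS k) \<sigma>) = proj_norm dW k"
proof (rule eq_matI)
  fix i i' assume "i < dim_row (proj_norm dW k)" "i' < dim_col (proj_norm dW k)"
  then have ii: "i < dW" "i' < dW" unfolding proj_norm_def by auto
  have "ptrace_S dW dS (kraus_apply (GKs dW dS k) \<sigma>) $$ (i,i') =
     (\<Sum>s<dS. kraus_apply (GKs dW dS k) \<sigma> $$ (i*dS+s, i'*dS+s))" using ii by (simp add: ptS_entry)
  also have "... = (\<Sum>s<dS. (if i = i' \<and> i < k then (\<Sum>j<k. \<sigma> $$ (j*dS + s, j*dS + s)) / of_nat k else 0)
    + (if k \<le> i \<and> k \<le> i' then \<sigma> $$ (i*dS+s, i'*dS+s) else 0))"
    using ii idx_lt[of i dW _ dS] idx_lt[of i' dW _ dS]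
    by (intro sum.cong refl) (simp add: G_out[OF dS k1 kW s])
  also have "... = (if i = i' \<and> i < k then (\<Sum>s<dS. \<Sum>j<k. \<sigma> $$ (j*dS + s, j*dS + s)) / of_nat k else 0)
    + (if k \<le> i \<and> k \<le> i' then ptrace_S dW dS \<sigma> $$ (i,i') else 0)"
    using ii by (simp only: sum.distrib sum_if_cond ptS_entry sum_divide_distrib)
  also have "(\<Sum>s<dS. \<Sum>j<k. \<sigma> $$ (j*dS + s, j*dS + s)) = (\<Sum>j<k. ptrace_S dW dS \<sigma> $$ (j,j))"
    using kW by (subst sum.swap) (intro sum.cong refl, simp add: ptS_entry)
  finally show "ptrace_S dW dS (kraus_apply (GKs dW dS k) \<sigma>) $$ (i,i') = proj_norm dW k $$ (i,i')"
    using t1 z ii unfolding proj_norm_def by auto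
qed (auto simp: ptrace_S_def proj_norm_def)

lemma G_ptW:
  assumes s: "\<sigma> \<in> carrier_mat (dW*dS) (dW*dS)"
  shows "ptrace_W dW dS (kraus_apply (GKs dW dS k) \<sigma>) = ptrace_W dW dS \<sigma>"
proof (rule eq_matI)
  fix s t assume "s < dim_row (ptrace_W dW dS \<sigma>)" "t < dim_col (ptrace_W dW dS \<sigma>)"
  then have st: "s < dS" "t < dS" unfolding ptrace_W_def by auto
  have "ptrace_W dW dS (kraus_apply (GKs dW dS k) \<sigma>) $$ (s,t) =
     (\<Sum>i<dW. kraus_apply (GKs dW dS k) \<sigma> $$ (i*dS+s, i*dS+t))" using st by (simp add: ptW_entry)
  also have "... = (\<Sum>i<dW. (if i < k then (\<Sum>j<k. \<sigma> $$ (j*dS + s, j*dS + t)) / of_nat k else 0)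
    + (if k \<le> i then \<sigma> $$ (i*dS+s, i*dS+t) else 0))"
    using st idx_lt[of _ dW s dS] idx_lt[of _ dW t dS]
    by (intro sum.cong refl) (simp add: G_out[OF dS k1 kW s])
  also have "... = (\<Sum>j<k. \<sigma> $$ (j*dS + s, j*dS + t)) + (\<Sum>i<dW. if k \<le> i then \<sigma> $$ (i*dS+s, i*dS+t) else 0)"
    using kW k1 by (simp add: sum.distrib sum_if_less)
  also have "... = ptrace_W dW dS \<sigma> $$ (s,t)"
    using st kW by (simp add: ptW_entry sum_split_at[symmetric])
  finally show "ptrace_W dW dS (kraus_apply (GKs dW dS k) \<sigma>) $$ (s,t) = ptrace_W dW dS \<sigma> $$ (s,t)" .
qed (auto simp: ptrace_W_def)

lemma G_Omega: "\<sigma> \<in> Omega dW dS \<Longrightarrow> kraus_apply (GKs dW dS k) \<sigma> \<in> Omega dW dS"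
  unfolding Omega_def using kraus_density[OF GKs_carrier G_TP[OF dS k1 kW]] by auto

end

lemma Omega_carrier: "\<sigma> \<in> Omega dW dS \<Longrightarrow> \<sigma> \<in> carrier_mat (dW*dS) (dW*dS)"
  unfolding Omega_def density_def by auto

lemma G_maps_C:
  assumes dS: "0 < dS" and k: "1 \<le> k0" "k0 \<le> k" "k \<le> dW" and s: "\<sigma> \<in> currency_set dW dS k0"
  shows "kraus_apply (GKs dW dS k) \<sigma> \<in> currency_set dW dS k \<and>
         ptrace_W dW dS (kraus_apply (GKs dW dS k) \<sigma>) = ptrace_W dW dS \<sigma>"
proof -
  have k1: "1 \<le> k" using k by simp
  have sO: "\<sigma> \<in> Omega dW dS" and p: "ptrace_S dW dS \<sigma> = proj_norm dW k0"
    using s unfolding currency_set_def by auto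
  have c: "\<sigma> \<in> carrier_mat (dW*dS) (dW*dS)" using Omega_carrier[OF sO] .
  have t1: "(\<Sum>j<k. ptrace_S dW dS \<sigma> $$ (j,j)) = 1"
  proof -
    have "(\<Sum>j<k. ptrace_S dW dS \<sigma> $$ (j,j)) = (\<Sum>j<k. if j < k0 then 1 / of_nat k0 else 0)"
      using k unfolding p proj_norm_def by (intro sum.cong refl) auto
    also have "... = 1" using k by (simp add: sum_if_less)
    finally show ?thesis .
  qed
  have z: "\<forall>i<dW. \<forall>i'<dW. k \<le> i \<longrightarrow> k \<le> i' \<longrightarrow> ptrace_S dW dS \<sigma> $$ (i,i') = 0"
    using k unfolding p proj_norm_def by auto
  show ?thesis unfolding currency_set_def
    using G_Omega[OF dS k1 k(3) sO] G_ptS[OF dS k1 k(3) c t1 z] G_ptW[OF dS k1 k(3) c] by auto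
qed

lemma G_maps_Omega:
  assumes dS: "0 < dS" and dW: "1 \<le> dW" and s: "\<sigma> \<in> Omega dW dS"
  shows "kraus_apply (GKs dW dS dW) \<sigma> \<in> currency_set dW dS dW \<and>
         ptrace_W dW dS (kraus_apply (GKs dW dS dW) \<sigma>) = ptrace_W dW dS \<sigma>"
proof -
  have c: "\<sigma> \<in> carrier_mat (dW*dS) (dW*dS)" using Omega_carrier[OF s] .
  have tr: "(\<Sum>i<dW*dS. \<sigma> $$ (i,i)) = 1" using s unfolding Omega_def density_iff by auto
  have t1: "(\<Sum>j<dW. ptrace_S dW dS \<sigma> $$ (j,j)) = 1"
    using tr by (simp add: ptS_entry sum_split_mult)
  have z: "\<forall>i<dW. \<forall>i'<dW. dW \<le> i \<longrightarrow> dW \<le> i' \<longrightarrow> ptrace_S dW dS \<sigma> $$ (i,i') = 0" by auto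
  show ?thesis unfolding currency_set_def
    using G_Omega[OF dS dW order.refl s] G_ptS[OF dS dW order.refl c t1 z] G_ptW[OF dS dW order.refl c] by auto
qed

lemma reachI: "unital_cptp (dW*dS) E \<Longrightarrow> (\<forall>\<rho>\<in>X. E \<rho> \<in> Y) \<Longrightarrow> reach dW dS X Y"
  unfolding reach_def by blast

lemma tens_in_C:
  assumes "0 < dS" "1 \<le> k" "k \<le> dW" "density dS \<tau>"
  shows "tens dW dS k \<tau> \<in> currency_set dW dS k"
  unfolding currency_set_def Omega_def using tens_density[OF assms] ptrace_S_tens[OF assms] by auto

lemma no_reach_down:
  assumes dS: "0 < dS" and k: "1 \<le> k'" "k' < k" "k \<le> dW"
  shows "\<not> reach dW dS (currency_set dW dS k) (currency_set dW dS k')"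
proof
  assume "reach dW dS (currency_set dW dS k) (currency_set dW dS k')"
  then obtain E where E: "unital_cptp (dW*dS) E" "\<forall>\<rho>\<in>currency_set dW dS k. E \<rho> \<in> currency_set dW dS k'"
    unfolding reach_def by blast
  obtain Ks where K: "\<forall>K\<in>set Ks. K \<in> carrier_mat (dW*dS) (dW*dS)" "UNc (dW*dS) Ks"
    "\<forall>\<rho>\<in>carrier_mat (dW*dS) (dW*dS). E \<rho> = kraus_apply Ks \<rho>"
    using unital_cptpD[OF E(1)] by metis
  define \<rho> where "\<rho> = tens dW dS k (mixS dS)"
  have k1: "1 \<le> k" using k by simp
  have rC: "\<rho> \<in> currency_set dW dS k" unfolding \<rho>_def by (rule tens_in_C[OF dS k1 k(3) mixS_density[OF dS]])
  have rc: "\<rho> \<in> carrier_mat (dW*dS) (dW*dS)" unfolding \<rho>_def tens_def by simp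
  define \<sigma> where "\<sigma> = kraus_apply Ks \<rho>"
  have sC: "\<sigma> \<in> currency_set dW dS k'" using E(2) rC K(3) rc unfolding \<sigma>_def by auto
  have diag: "\<forall>c<dW*dS. \<forall>d<dW*dS. c \<noteq> d \<longrightarrow> \<rho> $$ (c,d) = 0"
  proof (intro allI impI)
    fix c d assume cd: "c < dW*dS" "d < dW*dS" "c \<noteq> d"
    then have "c div dS \<noteq> d div dS \<or> c mod dS \<noteq> d mod dS" by (metis div_mult_mod_eq)
    then show "\<rho> $$ (c,d) = 0" using cd dS unfolding \<rho>_def tens_def mixS_def by auto
  qed
  define l where "l = 1 / (real k * real dS)"
  have bd: "\<forall>c<dW*dS. Re (\<rho> $$ (c,c)) \<le> l"
  proof (intro allI impI)
    fix c assume c: "c < dW*dS"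
    have "\<rho> $$ (c,c) = (if c div dS < k then 1 / of_nat dS / of_nat k else 0)"
      using c dS unfolding \<rho>_def tens_def mixS_def by simp
    then show "Re (\<rho> $$ (c,c)) \<le> l" unfolding l_def by (cases "c div dS < k") (simp_all add: mult.commute)
  qed
  have sb: "Re (\<sigma> $$ (x,x)) \<le> l" if "x < dW*dS" for x
    unfolding \<sigma>_def by (rule diag_bound[OF K(1) K(2) rc diag bd that])
  have p: "ptrace_S dW dS \<sigma> = proj_norm dW k'" using sC unfolding currency_set_def by auto
  have "(\<Sum>i<k'. ptrace_S dW dS \<sigma> $$ (i,i)) = (\<Sum>i<k'. 1 / of_nat k')"
    unfolding p proj_norm_def using k by (intro sum.cong refl) auto
  also have "... = 1" using k by simp
  finally have one: "(\<Sum>i<k'. \<Sum>s<dS. \<sigma> $$ (i*dS+s, i*dS+s)) = 1"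
    using k by (simp add: ptS_entry)
  have "1 = (\<Sum>i<k'. \<Sum>s<dS. Re (\<sigma> $$ (i*dS+s, i*dS+s)))"
    using arg_cong[OF one, of Re] by (simp add: Re_sum)
  also have "... \<le> (\<Sum>i<k'. \<Sum>s<dS. l)"
    using k idx_lt[of _ dW _ dS] by (intro sum_mono sb) auto
  also have "... = real k' * real dS * l" by simp
  also have "... = real k' / real k" unfolding l_def using dS by (simp add: field_simps)
  also have "... < 1" using k by simp
  finally show False by simp
qed

lemma no_reach_Omega:
  assumes dS: "0 < dS" and k: "1 \<le> k'" "k' < dW"
  shows "\<not> reach dW dS (Omega dW dS) (currency_set dW dS k')"
proof
  assume "reach dW dS (Omega dW dS) (currency_set dW dS k')"
  then have "reach dW dS (currency_set dW dS dW) (currency_set dW dS k')"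
    unfolding reach_def currency_set_def by blast
  then show False using no_reach_down[OF dS k(1) k(2) order.refl] by simp
qed

definition psdf :: "nat \<Rightarrow> (nat \<Rightarrow> nat \<Rightarrow> complex) \<Rightarrow> bool" where
  "psdf n A \<longleftrightarrow> (\<forall>i<n. \<forall>j<n. cnj (A j i) = A i j) \<and> (\<forall>v. Re (qf n A v) \<ge> 0)"

lemma qf_Suc: "qf (Suc n) A v = qf n A v + (\<Sum>j<n. cnj (v n) * A n j * v j)
   + (\<Sum>i<n. cnj (v i) * A i n * v n) + cnj (v n) * A n n * v n"
  unfolding qf_def by (simp add: sum.distrib)

lemma qf_upd: "qf n A (v(n := t)) = qf n A v"
  unfolding qf_def by (intro sum.cong refl) auto

lemma qf_delta: "j < n \<Longrightarrow> qf n A (\<lambda>i. if i = j then 1 else 0) = A j j"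
proof -
  assume j: "j < n"
  have "qf n A (\<lambda>i. if i = j then 1 else 0) = (\<Sum>i<n. \<Sum>k<n. if i = j \<and> k = j then A i k else 0)"
    unfolding qf_def by (intro sum.cong refl) auto
  then show ?thesis using j by (simp add: sum_delta_pair)
qed

lemma zero_row:
  assumes p: "psdf (Suc n) A" and a: "A n n = 0" and j: "j < n"
  shows "A n j = 0"
proof (rule ccontr)
  assume z0: "A n j \<noteq> 0"
  define z where "z = A n j"
  have hz: "A j n = cnj z" using p j unfolding psdf_def z_def by (metis complex_cnj_cnj less_SucI lessI)
  define R where "R = (\<bar>Re (A j j)\<bar> + 1) / (2 * (cmod z)^2)"
  define s where "s = - complex_of_real R * z"
  define v where "v = (\<lambda>i. if i = j then 1 else if i = n then s else (0::complex))"
  have vn: "v n = s" using j unfolding v_def by simp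
  have vj: "\<And>i. i < n \<Longrightarrow> v i = (if i = j then 1 else 0)" unfolding v_def by auto
  have q1: "qf n A v = A j j"
  proof -
    have "qf n A v = qf n A (\<lambda>i. if i = j then 1 else 0)"
      unfolding qf_def using vj by (intro sum.cong refl) auto
    then show ?thesis using qf_delta[OF j] by simp
  qed
  have s1: "(\<Sum>k<n. cnj (v n) * A n k * v k) = cnj s * z"
  proof -
    have "(\<Sum>k<n. cnj (v n) * A n k * v k) = (\<Sum>k<n. if k = j then cnj s * z else 0)"
      using vj vn unfolding z_def by (intro sum.cong refl) auto
    then show ?thesis using j by simp
  qed
  have s2: "(\<Sum>i<n. cnj (v i) * A i n * v n) = cnj z * s"
  proof -
    have "(\<Sum>i<n. cnj (v i) * A i n * v n) = (\<Sum>i<n. if i = j then cnj z * s else 0)"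
      using vj vn hz by (intro sum.cong refl) auto
    then show ?thesis using j by simp
  qed
  have "qf (Suc n) A v = A j j + cnj s * z + cnj z * s"
    unfolding qf_Suc q1 s1 s2 using a by simp
  moreover have "cnj s * z + cnj z * s = - complex_of_real (2 * R * (cmod z)^2)"
  proof -
    have "cnj s * z + cnj z * s = - (2 * complex_of_real R) * (cnj z * z)" unfolding s_def by (simp add: algebra_simps)
    then show ?thesis unfolding mcnj_aux by simp
  qed
  ultimately have "Re (qf (Suc n) A v) = Re (A j j) - 2 * R * (cmod z)^2"
    by (simp add: add.assoc)
  also have "... = Re (A j j) - (\<bar>Re (A j j)\<bar> + 1)"
    unfolding R_def using z0 z_def by (simp add: field_simps)
  also have "... < 0" by simp
  finally show False using p unfolding psdf_def by (metis not_le)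
qed

lemma factor_psd:
  "psdf n A \<Longrightarrow> \<exists>B. \<forall>i<n. \<forall>j<n. A i j = (\<Sum>m<n. B i m * cnj (B j m))"
proof (induction n arbitrary: A)
  case 0 then show ?case by simp
next
  case (Suc n)
  have herm: "\<And>i j. i < Suc n \<Longrightarrow> j < Suc n \<Longrightarrow> cnj (A j i) = A i j"
    using Suc.prems unfolding psdf_def by blast
  have pos: "\<And>v. Re (qf (Suc n) A v) \<ge> 0" using Suc.prems unfolding psdf_def by blast
  have hnj: "\<And>j. j < Suc n \<Longrightarrow> cnj (A j n) = A n j" using herm by simp
  have hjn: "\<And>j. j < Suc n \<Longrightarrow> cnj (A n j) = A j n" using herm by simp
  define r where "r = Re (A n n)"
  have "cnj (A n n) = A n n" using herm[of n n] by simp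
  then have "A n n \<in> \<real>" using Reals_cnj_iff by blast
  then have ann: "A n n = complex_of_real r" unfolding r_def using of_real_Re by metis
  have r0: "r \<ge> 0"
  proof -
    have "qf (Suc n) A (\<lambda>i. if i = n then 1 else 0) = A n n" by (rule qf_delta) simp
    then show ?thesis using pos[of "\<lambda>i. if i = n then 1 else 0"] unfolding r_def by simp
  qed
  define b where "b i = (if r = 0 then 0 else A i n / complex_of_real (sqrt r))" for i
  define A' where "A' i j = A i j - b i * cnj (b j)" for i j
  have hA': "\<forall>i<n. \<forall>j<n. cnj (A' j i) = A' i j"
  proof (intro allI impI)
    fix i j assume "i < n" "j < n"
    then have "cnj (A j i) = A i j" using herm by simp
    then show "cnj (A' j i) = A' i j" unfolding A'_def by (simp add: mult.commute)
  qed
  have pA': "Re (qf n A' v) \<ge> 0" for v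
  proof (cases "r = 0")
    case True
    then have "qf n A' v = qf n A v" unfolding A'_def b_def by simp
    also have "... = qf (Suc n) A (v(n := 0))"
      unfolding qf_Suc qf_upd by simp
    finally show ?thesis using pos by simp
  next
    case False
    then have rp: "r > 0" using r0 by simp
    have rc: "complex_of_real r \<noteq> 0" using rp by simp
    define u where "u = (\<Sum>j<n. A n j * v j)"
    have u': "(\<Sum>i<n. cnj (v i) * A i n) = cnj u"
    proof -
      have "cnj u = (\<Sum>j<n. cnj (A n j) * cnj (v j))" unfolding u_def by (simp add: cnj_sum)
      also have "... = (\<Sum>j<n. cnj (v j) * A j n)" using hjn by (intro sum.cong refl) (simp add: mult.commute)
      finally show ?thesis by simp
    qed
    have sq: "complex_of_real (sqrt r) * complex_of_real (sqrt r) = complex_of_real r"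
      using rp by (simp flip: of_real_mult)
    have bb: "b i * cnj (b j) = A i n * A n j / complex_of_real r" if "i < n" "j < n" for i j
    proof -
      have "b i * cnj (b j) = A i n * cnj (A j n) / (complex_of_real (sqrt r) * complex_of_real (sqrt r))"
        unfolding b_def using False by simp
      then show ?thesis unfolding sq using hnj[of j] that by simp
    qed
    have e1: "qf n A' v = qf n A v - cnj u * u / complex_of_real r"
    proof -
      have "qf n A' v = (\<Sum>i<n. \<Sum>j<n. cnj (v i) * A i j * v j - cnj (v i) * (b i * cnj (b j)) * v j)"
        unfolding qf_def A'_def by (simp only: left_diff_distrib right_diff_distrib)
      also have "... = qf n A v - (\<Sum>i<n. \<Sum>j<n. cnj (v i) * (b i * cnj (b j)) * v j)"
        unfolding qf_def by (simp only: sum_subtractf)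
      also have "(\<Sum>i<n. \<Sum>j<n. cnj (v i) * (b i * cnj (b j)) * v j)
          = (\<Sum>i<n. \<Sum>j<n. (cnj (v i) * A i n) * (A n j * v j) / complex_of_real r)"
        using bb by (intro sum.cong refl) (simp add: mult_ac)
      also have "... = (\<Sum>i<n. cnj (v i) * A i n) * u / complex_of_real r"
        unfolding u_def sum_product by (simp add: sum_divide_distrib)
      finally show ?thesis using u' by simp
    qed
    define t where "t = - u / complex_of_real r"
    have c1: "cnj t * u = - (cnj u * u) / complex_of_real r" unfolding t_def by simp
    have c2: "cnj u * t = - (cnj u * u) / complex_of_real r" unfolding t_def by simp
    have c3: "cnj t * complex_of_real r * t = (cnj u * u) / complex_of_real r"
      unfolding t_def using rc by (simp add: field_simps)
    have e2: "qf (Suc n) A (v(n := t)) = qf n A v + cnj t * u + cnj u * t + cnj t * A n n * t"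
    proof -
      have "(\<Sum>j<n. cnj t * A n j * v j) = cnj t * u" unfolding u_def by (simp add: sum_distrib_left mult.assoc)
      moreover have "(\<Sum>i<n. cnj (v i) * A i n * t) = cnj u * t" by (simp only: sum_distrib_right[symmetric] u')
      ultimately show ?thesis unfolding qf_Suc qf_upd by simp
    qed
    have "qf (Suc n) A (v(n := t)) = qf n A v - cnj u * u / complex_of_real r"
      unfolding e2 ann c1 c2 c3 by (simp add: diff_divide_distrib)
    then show ?thesis using e1 pos by metis
  qed
  have "psdf n A'" unfolding psdf_def using hA' pA' by blast
  then obtain B' where B': "\<forall>i<n. \<forall>j<n. A' i j = (\<Sum>m<n. B' i m * cnj (B' j m))"
    using Suc.IH by blast
  define B where "B i m = (if m < n then (if i < n then B' i m else 0) else b i)" for i m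
  have bn: "b n * cnj (b j) = A n j \<and> b j * cnj (b n) = A j n" if j: "j < Suc n" for j
  proof (cases "r = 0")
    case True
    have z: "A n j = 0 \<and> A j n = 0"
    proof (cases "j = n")
      case True
      then show ?thesis using ann \<open>r = 0\<close> by simp
    next
      case False
      then have jn: "j < n" using j by simp
      have "A n j = 0" using zero_row[OF Suc.prems _ jn] ann \<open>r = 0\<close> by simp
      moreover have "cnj (A n j) = A j n" using hjn j by simp
      ultimately show ?thesis by simp
    qed
    then show ?thesis unfolding b_def using True by simp
  next
    case False
    then have rp: "r > 0" using r0 by simp
    have sr: "complex_of_real (sqrt r) \<noteq> 0" using rp by simp
    have bnv: "b n = complex_of_real (sqrt r)"
      unfolding b_def using False ann rp by (simp add: real_div_sqrt flip: of_real_divide)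
    have bj: "b j = A j n / complex_of_real (sqrt r)" unfolding b_def using False by simp
    have "b n * cnj (b j) = cnj (A j n)" using sr by (simp add: bnv bj)
    moreover have "b j * cnj (b n) = A j n" using sr by (simp add: bnv bj)
    ultimately show ?thesis using hnj j by simp
  qed
  have "\<forall>i<Suc n. \<forall>j<Suc n. A i j = (\<Sum>m<Suc n. B i m * cnj (B j m))"
  proof (intro allI impI)
    fix i j assume ij: "i < Suc n" "j < Suc n"
    have s1: "(\<Sum>m<Suc n. B i m * cnj (B j m)) = (\<Sum>m<n. B i m * cnj (B j m)) + b i * cnj (b j)"
      unfolding B_def by simp
    show "A i j = (\<Sum>m<Suc n. B i m * cnj (B j m))"
    proof (cases "i < n \<and> j < n")
      case True
      have "(\<Sum>m<n. B i m * cnj (B j m)) = (\<Sum>m<n. B' i m * cnj (B' j m))"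
        unfolding B_def using True by (intro sum.cong refl) simp
      moreover have "A i j - b i * cnj (b j) = (\<Sum>m<n. B' i m * cnj (B' j m))"
        using B' True unfolding A'_def by blast
      ultimately show ?thesis unfolding s1 by (simp add: algebra_simps)
    next
      case False
      have "(\<Sum>m<n. B i m * cnj (B j m)) = 0"
        unfolding B_def using False by (intro sum.neutral) auto
      moreover have "i = n \<or> j = n" using ij False by auto
      ultimately show ?thesis unfolding s1 using bn ij by auto
    qed
  qed
  then show ?case by blast
qed

lemma real_cs: fixes a b :: "nat \<Rightarrow> real"
  shows "(\<Sum>i<n. a i * b i)^2 \<le> (\<Sum>i<n. (a i)^2) * (\<Sum>i<n. (b i)^2)"
proof -
  have pt: "(a i * b j - a j * b i)^2 = (a i)^2 * (b j)^2 + (a j)^2 * (b i)^2 - 2 * ((a i * b i) * (a j * b j))" for i j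
    by (simp add: power2_eq_square algebra_simps)
  have "0 \<le> (\<Sum>i<n. \<Sum>j<n. (a i * b j - a j * b i)^2)" by (intro sum_nonneg) simp
  also have "... = (\<Sum>i<n. \<Sum>j<n. (a i)^2 * (b j)^2) + (\<Sum>i<n. \<Sum>j<n. (a j)^2 * (b i)^2)
      - 2 * (\<Sum>i<n. \<Sum>j<n. (a i * b i) * (a j * b j))"
    unfolding pt by (simp only: sum.distrib sum_subtractf sum_distrib_left)
  also have "(\<Sum>i<n. \<Sum>j<n. (a i)^2 * (b j)^2) = (\<Sum>i<n. (a i)^2) * (\<Sum>i<n. (b i)^2)"
    by (simp add: sum_product)
  also have "(\<Sum>i<n. \<Sum>j<n. (a j)^2 * (b i)^2) = (\<Sum>i<n. (a i)^2) * (\<Sum>i<n. (b i)^2)"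
    by (subst sum.swap) (simp add: sum_product)
  also have "(\<Sum>i<n. \<Sum>j<n. (a i * b i) * (a j * b j)) = (\<Sum>i<n. a i * b i)^2"
    by (simp add: sum_product power2_eq_square)
  finally show ?thesis by simp
qed

lemma complex_cs: fixes x y :: "nat \<Rightarrow> complex"
  shows "(cmod (\<Sum>j<n. x j * y j))^2 \<le> (\<Sum>j<n. (cmod (x j))^2) * (\<Sum>j<n. (cmod (y j))^2)"
proof -
  have "cmod (\<Sum>j<n. x j * y j) \<le> (\<Sum>j<n. cmod (x j) * cmod (y j))"
    by (rule order.trans[OF norm_sum]) (simp add: norm_mult)
  then have "(cmod (\<Sum>j<n. x j * y j))^2 \<le> (\<Sum>j<n. cmod (x j) * cmod (y j))^2"
    by (intro power_mono) auto
  also have "... \<le> (\<Sum>j<n. (cmod (x j))^2) * (\<Sum>j<n. (cmod (y j))^2)" by (rule real_cs)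
  finally show ?thesis .
qed

lemma qf_lin: "qf n (\<lambda>i j. c1 * f i j + c2 * g i j) v = c1 * qf n f v + c2 * qf n g v"
  unfolding qf_def by (simp add: algebra_simps sum.distrib sum_distrib_left)

lemma qf_id: "qf n (\<lambda>i j. if i = j then 1 else 0) v = (\<Sum>i<n. cnj (v i) * v i)"
proof -
  have "qf n (\<lambda>i j. if i = j then 1 else 0) v = (\<Sum>i<n. \<Sum>j<n. if j = i then cnj (v i) * v i else 0)"
    unfolding qf_def by (intro sum.cong refl) auto
  then show ?thesis by simp
qed

lemma Re_cnj_mult: "Re (cnj a * a) = (cmod a)^2"
  using Re_mcnj[of a] by (simp add: mult.commute)

lemma density_psdf: "density n \<tau> \<Longrightarrow> psdf n (\<lambda>i j. \<tau> $$ (i,j))"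
  unfolding density_iff psdf_def by auto

lemma density_le_id:
  assumes d: "density n \<tau>"
  shows "Re (qf n (\<lambda>i j. \<tau> $$ (i,j)) v) \<le> (\<Sum>j<n. (cmod (v j))^2)"
proof -
  obtain B where B: "\<forall>i<n. \<forall>j<n. \<tau> $$ (i,j) = (\<Sum>m<n. B i m * cnj (B j m))"
    using factor_psd[OF density_psdf[OF d]] by blast
  define g where "g m = (\<Sum>j<n. cnj (B j m) * v j)" for m
  have "qf n (\<lambda>i j. \<tau> $$ (i,j)) v = qf n (\<lambda>i j. \<Sum>m<n. B i m * cnj (B j m)) v"
    by (rule qf_cong) (simp add: B)
  also have "... = (\<Sum>m<n. qf n (\<lambda>i j. B i m * cnj (B j m)) v)" by (rule qf_sum)
  also have "... = (\<Sum>m<n. cnj (g m) * g m)"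
  proof (intro sum.cong refl)
    fix m
    have "qf n (\<lambda>i j. B i m * cnj (B j m)) v = (\<Sum>i<n. cnj (v i) * B i m) * (\<Sum>j<n. cnj (B j m) * v j)"
      unfolding qf_def sum_product by (intro sum.cong refl) (simp add: mult_ac)
    also have "(\<Sum>i<n. cnj (v i) * B i m) = cnj (g m)" unfolding g_def by (simp add: cnj_sum mult.commute)
    finally show "qf n (\<lambda>i j. B i m * cnj (B j m)) v = cnj (g m) * g m" unfolding g_def by simp
  qed
  finally have "Re (qf n (\<lambda>i j. \<tau> $$ (i,j)) v) = (\<Sum>m<n. (cmod (g m))^2)"
    by (simp only: Re_sum Re_cnj_mult)
  also have "... \<le> (\<Sum>m<n. (\<Sum>j<n. (cmod (cnj (B j m)))^2) * (\<Sum>j<n. (cmod (v j))^2))"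
    unfolding g_def by (intro sum_mono complex_cs)
  also have "... = (\<Sum>m<n. \<Sum>j<n. (cmod (B j m))^2) * (\<Sum>j<n. (cmod (v j))^2)"
    by (simp add: sum_distrib_right)
  also have "(\<Sum>m<n. \<Sum>j<n. (cmod (B j m))^2) = 1"
  proof -
    have "(\<Sum>m<n. \<Sum>j<n. (cmod (B j m))^2) = (\<Sum>j<n. \<Sum>m<n. Re (B j m * cnj (B j m)))"
      by (subst sum.swap) (simp only: Re_mcnj)
    also have "... = Re (\<Sum>j<n. \<tau> $$ (j,j))" using B by (simp add: Re_sum)
    also have "... = 1" using d unfolding density_iff by simp
    finally show ?thesis .
  qed
  finally show ?thesis by simp
qed

definition Dmat :: "nat \<Rightarrow> nat \<Rightarrow> complex mat \<Rightarrow> nat \<Rightarrow> nat \<Rightarrow> complex" where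
  "Dmat dW dS \<tau> i j = complex_of_real (real dW / (real (dW - 1) * real dS)) * (if i = j then 1 else 0)
     + complex_of_real (- 1 / real (dW - 1)) * \<tau> $$ (i,j)"

lemma Re_lin: "Re (complex_of_real a * X + complex_of_real b * Y) = a * Re X + b * Re Y"
  by simp

lemma Dmat_psdf:
  assumes d: "density dS \<tau>" and dS: "0 < dS" and dW: "dS \<le> dW" "2 \<le> dW"
  shows "psdf dS (Dmat dW dS \<tau>)"
proof -
  have herm: "\<forall>i<dS. \<forall>j<dS. cnj (\<tau> $$ (j,i)) = \<tau> $$ (i,j)" using d unfolding density_iff by auto
  have "Re (qf dS (Dmat dW dS \<tau>) v) \<ge> 0" for v
  proof -
    have "Re (qf dS (Dmat dW dS \<tau>) v) = (real dW / (real (dW - 1) * real dS)) * (\<Sum>i<dS. (cmod (v i))^2)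
        - (1 / real (dW - 1)) * Re (qf dS (\<lambda>i j. \<tau> $$ (i,j)) v)"
    proof -
      have A: "qf dS (Dmat dW dS \<tau>) v = complex_of_real (real dW / (real (dW - 1) * real dS)) * (\<Sum>i<dS. cnj (v i) * v i)
          + complex_of_real (- 1 / real (dW - 1)) * qf dS (\<lambda>i j. \<tau> $$ (i,j)) v"
        unfolding Dmat_def qf_lin qf_id ..
      have B: "Re (\<Sum>i<dS. cnj (v i) * v i) = (\<Sum>i<dS. (cmod (v i))^2)" by (simp only: Re_sum Re_cnj_mult)
      show ?thesis unfolding A Re_lin B by simp
    qed
    also have "... \<ge> 0"
    proof -
      define S where "S = (\<Sum>i<dS. (cmod (v i))^2)"
      have S0: "S \<ge> 0" unfolding S_def by (intro sum_nonneg) auto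
      have q: "Re (qf dS (\<lambda>i j. \<tau> $$ (i,j)) v) \<le> S" unfolding S_def by (rule density_le_id[OF d])
      have w1: "real (dW - 1) > 0" using dW by simp
      have "(1 / real (dW - 1)) * Re (qf dS (\<lambda>i j. \<tau> $$ (i,j)) v) \<le> (1 / real (dW - 1)) * S"
        using q w1 by (intro mult_left_mono) auto
      also have "... \<le> (real dW / (real (dW - 1) * real dS)) * S"
      proof (intro mult_right_mono S0)
        have "0 \<le> (real dW - real dS) * (real dW - 1)" by (rule mult_nonneg_nonneg) (use dW in auto)
        then have h: "real dW + real dS * real dW \<le> real dS + real dW * real dW" by (simp add: algebra_simps)
        show "1 / real (dW - 1) \<le> real dW / (real (dW - 1) * real dS)"
          using w1 dS dW h by (simp add: field_simps of_nat_diff)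
      qed
      finally show ?thesis unfolding S_def by simp
    qed
    finally show ?thesis .
  qed
  moreover have "\<forall>i<dS. \<forall>j<dS. cnj (Dmat dW dS \<tau> j i) = Dmat dW dS \<tau> i j"
    using herm unfolding Dmat_def by auto
  ultimately show ?thesis unfolding psdf_def by auto
qed

lemma ofr_aux: "of_nat n * complex_of_real a + complex_of_real b * 1 = complex_of_real (real n * a + b)"
  by simp

lemma Dmat_trace:
  assumes d: "density dS \<tau>" and dS: "0 < dS" and dW: "2 \<le> dW"
  shows "(\<Sum>i<dS. Dmat dW dS \<tau> i i) = 1"
proof -
  have t: "(\<Sum>i<dS. \<tau> $$ (i,i)) = 1" using d unfolding density_iff by auto
  have s1: "(\<Sum>i<dS. Dmat dW dS \<tau> i i) = (\<Sum>i<dS. complex_of_real (real dW / (real (dW - 1) * real dS)))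
      + complex_of_real (- 1 / real (dW - 1)) * (\<Sum>i<dS. \<tau> $$ (i,i))"
    unfolding Dmat_def by (simp only: sum.distrib sum_distrib_left) simp
  have s2: "(\<Sum>i<dS. complex_of_real (real dW / (real (dW - 1) * real dS))) =
     of_nat dS * complex_of_real (real dW / (real (dW - 1) * real dS))" by simp
  have s3: "(\<Sum>i<dS. Dmat dW dS \<tau> i i) = complex_of_real (real dS * (real dW / (real (dW - 1) * real dS)) + (- 1 / real (dW - 1)))"
    unfolding s1 s2 t by (rule ofr_aux)
  have "real dS * (real dW / (real (dW - 1) * real dS)) + (- 1 / real (dW - 1)) = 1"
  proof -
    define x where "x = real (dW - 1)"
    have w1: "x > 0" "real dW = x + 1" unfolding x_def using dW by auto
    have "real dS * (real dW / (x * real dS)) = real dW / x" using dS by simp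
    moreover have "real dW / x + (- 1 / x) = 1" unfolding w1(2) using w1(1) by (simp add: field_simps)
    ultimately show ?thesis unfolding x_def by simp
  qed
  then show ?thesis unfolding s3 by simp
qed

definition Rop :: "nat \<Rightarrow> (nat \<Rightarrow> nat \<Rightarrow> nat \<Rightarrow> complex) \<Rightarrow> nat \<Rightarrow> nat \<Rightarrow> complex mat" where
  "Rop N \<phi> a j = mat N N (\<lambda>(x,c). if c = a then \<phi> a j x else 0)"

definition RKs :: "nat \<Rightarrow> nat \<Rightarrow> (nat \<Rightarrow> nat \<Rightarrow> nat \<Rightarrow> complex) \<Rightarrow> complex mat list" where
  "RKs N M \<phi> = map (\<lambda>l. Rop N \<phi> (l div M) (l mod M)) [0..<N*M]"

lemma RKs_carrier: "\<forall>K\<in>set (RKs N M \<phi>). K \<in> carrier_mat N N"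
  unfolding RKs_def Rop_def by auto

lemma RKs_sum: "0 < M \<Longrightarrow> (\<Sum>l<length (RKs N M \<phi>). F (RKs N M \<phi> ! l)) = (\<Sum>a<N. \<Sum>j<M. F (Rop N \<phi> a j))"
proof -
  assume M: "0 < M"
  have "(\<Sum>l<length (RKs N M \<phi>). F (RKs N M \<phi> ! l)) = (\<Sum>l<N*M. F (Rop N \<phi> (l div M) (l mod M)))"
    unfolding RKs_def by simp
  also have "... = (\<Sum>a<N. \<Sum>j<M. F (Rop N \<phi> ((a*M+j) div M) ((a*M+j) mod M)))"
    by (rule sum_split_mult)
  also have "... = (\<Sum>a<N. \<Sum>j<M. F (Rop N \<phi> a j))"
    by (intro sum.cong refl) simp
  finally show ?thesis .
qed

lemma Rop_entry: "x < N \<Longrightarrow> c < N \<Longrightarrow> Rop N \<phi> a j $$ (x,c) = (if c = a then \<phi> a j x else 0)"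
  unfolding Rop_def by simp

lemma R_out:
  assumes M: "0 < M" and s: "\<sigma> \<in> carrier_mat N N" and xy: "x < N" "y < N"
  shows "kraus_apply (RKs N M \<phi>) \<sigma> $$ (x,y) = (\<Sum>a<N. \<Sum>j<M. \<phi> a j x * \<sigma> $$ (a,a) * cnj (\<phi> a j y))"
proof -
  have "kraus_apply (RKs N M \<phi>) \<sigma> $$ (x,y) =
     (\<Sum>a<N. \<Sum>j<M. \<Sum>c<N. \<Sum>d<N. Rop N \<phi> a j $$ (x,c) * \<sigma> $$ (c,d) * cnj (Rop N \<phi> a j $$ (y,d)))"
    unfolding kraus_entry(2)[OF RKs_carrier s xy] by (rule RKs_sum[OF M])
  also have "... = (\<Sum>a<N. \<Sum>j<M. \<Sum>c<N. \<Sum>d<N. if c = a \<and> d = a then \<phi> a j x * \<sigma> $$ (c,d) * cnj (\<phi> a j y) else 0)"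
    using xy by (intro sum.cong refl) (auto simp: Rop_entry)
  also have "... = (\<Sum>a<N. \<Sum>j<M. \<phi> a j x * \<sigma> $$ (a,a) * cnj (\<phi> a j y))"
    by (intro sum.cong refl) (simp add: sum_delta_pair)
  finally show ?thesis .
qed

context
  fixes N M :: nat and \<phi> :: "nat \<Rightarrow> nat \<Rightarrow> nat \<Rightarrow> complex"
  assumes M: "0 < M"
    and N1: "\<forall>a<N. (\<Sum>j<M. \<Sum>x<N. cnj (\<phi> a j x) * \<phi> a j x) = 1"
    and N2: "\<forall>x<N. \<forall>y<N. (\<Sum>a<N. \<Sum>j<M. \<phi> a j x * cnj (\<phi> a j y)) = (if x = y then 1 else 0)"
begin

lemma R_TP: "TPc N (RKs N M \<phi>)"
  unfolding TPc_def
proof (intro allI impI)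
  fix c d assume cd: "c < N" "d < N"
  have "(\<Sum>l<length (RKs N M \<phi>). \<Sum>a<N. cnj (RKs N M \<phi> ! l $$ (a,d)) * RKs N M \<phi> ! l $$ (a,c))
     = (\<Sum>a<N. \<Sum>j<M. \<Sum>x<N. cnj (Rop N \<phi> a j $$ (x,d)) * Rop N \<phi> a j $$ (x,c))"
    by (rule RKs_sum[OF M])
  also have "... = (\<Sum>a<N. if a = d then (if c = d then (\<Sum>j<M. \<Sum>x<N. cnj (\<phi> d j x) * \<phi> d j x) else 0) else 0)"
    using cd by (intro sum.cong refl) (auto simp: Rop_entry)
  also have "... = (if d = c then 1 else 0)" using cd N1 by auto
  finally show "(\<Sum>l<length (RKs N M \<phi>). \<Sum>a<N. cnj (RKs N M \<phi> ! l $$ (a,d)) * RKs N M \<phi> ! l $$ (a,c))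
     = (if d = c then 1 else 0)" .
qed

lemma R_UN: "UNc N (RKs N M \<phi>)"
  unfolding UNc_def
proof (intro allI impI)
  fix x y assume xy: "x < N" "y < N"
  have "(\<Sum>l<length (RKs N M \<phi>). \<Sum>c<N. RKs N M \<phi> ! l $$ (x,c) * cnj (RKs N M \<phi> ! l $$ (y,c)))
     = (\<Sum>a<N. \<Sum>j<M. \<Sum>c<N. Rop N \<phi> a j $$ (x,c) * cnj (Rop N \<phi> a j $$ (y,c)))"
    by (rule RKs_sum[OF M])
  also have "... = (\<Sum>a<N. \<Sum>j<M. \<Sum>c<N. if c = a then \<phi> a j x * cnj (\<phi> a j y) else 0)"
    using xy by (intro sum.cong refl) (auto simp: Rop_entry)
  also have "... = (\<Sum>a<N. \<Sum>j<M. \<phi> a j x * cnj (\<phi> a j y))"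
    by (intro sum.cong refl) simp
  also have "... = (if x = y then 1 else 0)" using N2 xy by auto
  finally show "(\<Sum>l<length (RKs N M \<phi>). \<Sum>c<N. RKs N M \<phi> ! l $$ (x,c) * cnj (RKs N M \<phi> ! l $$ (y,c)))
     = (if x = y then 1 else 0)" .
qed

lemma R_unital: "0 < N \<Longrightarrow> unital_cptp N (kraus_apply (RKs N M \<phi>))"
  by (rule unital_cptpI[OF _ RKs_carrier R_TP R_UN]) (use M in \<open>simp add: RKs_def\<close>)

end

lemma block_sum:
  assumes "0 < (dS::nat)" "(w::nat) < dW"
  shows "(\<Sum>x<dW*dS. if x div dS = w then f (x mod dS) else 0) = (\<Sum>t<dS. f t)"
proof -
  have "(\<Sum>x<dW*dS. if x div dS = w then f (x mod dS) else 0) =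
      (\<Sum>i<dW. \<Sum>t<dS. if (i*dS+t) div dS = w then f ((i*dS+t) mod dS) else 0)"
    by (rule sum_split_mult)
  also have "... = (\<Sum>i<dW. if i = w then (\<Sum>t<dS. f t) else 0)"
    by (intro sum.cong refl) (auto simp: sum_if_cond)
  also have "... = (\<Sum>t<dS. f t)" using assms by simp
  finally show ?thesis .
qed

lemma mod_sum: "(\<Sum>j<dW*dS. g (j mod dS)) = of_nat dW * (\<Sum>m<dS. g m)"
proof -
  have "(\<Sum>j<dW*dS. g (j mod dS)) = (\<Sum>i<dW. \<Sum>m<dS. g ((i*dS+m) mod dS))" by (rule sum_split_mult)
  also have "... = (\<Sum>i<dW. \<Sum>m<dS. g m)" by (intro sum.cong refl) auto
  finally show ?thesis by simp
qed

lemma div_sum: "(\<Sum>a<dW*dS. g (a div dS)) = of_nat dS * (\<Sum>i<dW. g i)"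
proof -
  have "(\<Sum>a<dW*dS. g (a div dS)) = (\<Sum>i<dW. \<Sum>m<dS. g ((i*dS+m) div dS))" by (rule sum_split_mult)
  also have "... = (\<Sum>i<dW. \<Sum>m<dS. g i)" by (intro sum.cong refl) auto
  finally show ?thesis by (simp add: sum_distrib_left)
qed

definition Hf :: "nat \<Rightarrow> nat \<Rightarrow> complex mat \<Rightarrow> nat \<Rightarrow> nat \<Rightarrow> nat \<Rightarrow> complex" where
  "Hf dW dS \<tau> i p q = (if i = 0 then \<tau> $$ (p,q) else Dmat dW dS \<tau> p q)"

definition phiR :: "nat \<Rightarrow> nat \<Rightarrow> (nat \<Rightarrow> nat \<Rightarrow> complex) \<Rightarrow> (nat \<Rightarrow> nat \<Rightarrow> complex) \<Rightarrow> nat \<Rightarrow> nat \<Rightarrow> nat \<Rightarrow> complex" where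
  "phiR dW dS B C a j x = (if x div dS = j div dS then kap dW * (if a div dS = 0 then B else C) (x mod dS) (j mod dS) else 0)"

context
  fixes dW dS :: nat and \<tau> :: "complex mat" and B C :: "nat \<Rightarrow> nat \<Rightarrow> complex"
  assumes dS: "0 < dS" and dW2: "2 \<le> dW" and dSW: "dS \<le> dW" and d: "density dS \<tau>"
    and HB: "\<forall>p<dS. \<forall>q<dS. \<tau> $$ (p,q) = (\<Sum>m<dS. B p m * cnj (B q m))"
    and HC: "\<forall>p<dS. \<forall>q<dS. Dmat dW dS \<tau> p q = (\<Sum>m<dS. C p m * cnj (C q m))"
begin

lemma dW0: "0 < dW" using dW2 by simp

lemma HF: "p < dS \<Longrightarrow> q < dS \<Longrightarrow> Hf dW dS \<tau> i p q = (\<Sum>m<dS. (if i = 0 then B else C) p m * cnj ((if i = 0 then B else C) q m))"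
  unfolding Hf_def using HB HC by auto

lemma Htr: "(\<Sum>p<dS. Hf dW dS \<tau> i p p) = 1"
  using Dmat_trace[OF d dS dW2] d unfolding Hf_def density_iff by (cases "i = 0") simp_all

lemma Hsum:
  assumes "p < dS" "q < dS"
  shows "(\<Sum>i<dW. Hf dW dS \<tau> i p q) = (if p = q then of_nat dW / of_nat dS else 0)"
proof -
  have "(\<Sum>i<dW. Hf dW dS \<tau> i p q) = (\<Sum>i<Suc (dW - 1). Hf dW dS \<tau> i p q)" using dW2 by simp
  also have "... = \<tau> $$ (p,q) + (\<Sum>i<dW - 1. Dmat dW dS \<tau> p q)"
    unfolding sum.lessThan_Suc_shift Hf_def by simp
  also have "... = \<tau> $$ (p,q) + of_nat (dW - 1) * Dmat dW dS \<tau> p q" by simp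
  also have "... = (if p = q then of_nat dW / of_nat dS else 0)"
  proof -
    have w: "real (dW - 1) \<noteq> 0" using dW2 by simp
    have "of_nat (dW - 1) * Dmat dW dS \<tau> p q = complex_of_real (real (dW - 1) * (real dW / (real (dW - 1) * real dS))) * (if p = q then 1 else 0)
       + complex_of_real (real (dW - 1) * (- 1 / real (dW - 1))) * \<tau> $$ (p,q)"
      unfolding Dmat_def by (simp add: algebra_simps)
    also have "... = complex_of_real (real dW / real dS) * (if p = q then 1 else 0) - \<tau> $$ (p,q)"
      using w by simp
    finally show ?thesis by simp
  qed
  finally show ?thesis .
qed

lemma kapW: "kap dW * cnj (kap dW) = 1 / of_nat dW" by (rule kap_sq[OF dW0])

abbreviation "\<phi> \<equiv> phiR dW dS B C"

lemma N1: "\<forall>a<dW*dS. (\<Sum>j<dW*dS. \<Sum>x<dW*dS. cnj (\<phi> a j x) * \<phi> a j x) = 1"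
proof (intro allI impI)
  fix a assume a: "a < dW*dS"
  define F where "F = (if a div dS = 0 then B else C)"
  have inner: "(\<Sum>x<dW*dS. cnj (\<phi> a j x) * \<phi> a j x) = (\<Sum>t<dS. cnj (F t (j mod dS)) * F t (j mod dS) / of_nat dW)"
    if j: "j < dW*dS" for j
  proof -
    have "(\<Sum>x<dW*dS. cnj (\<phi> a j x) * \<phi> a j x) =
       (\<Sum>x<dW*dS. if x div dS = j div dS then cnj (F (x mod dS) (j mod dS)) * F (x mod dS) (j mod dS) / of_nat dW else 0)"
    proof (intro sum.cong refl)
      fix x
      have "cnj (kap dW * F (x mod dS) (j mod dS)) * (kap dW * F (x mod dS) (j mod dS))
         = (kap dW * cnj (kap dW)) * (cnj (F (x mod dS) (j mod dS)) * F (x mod dS) (j mod dS))" by (simp add: mult_ac)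
      then show "cnj (\<phi> a j x) * \<phi> a j x = (if x div dS = j div dS then cnj (F (x mod dS) (j mod dS)) * F (x mod dS) (j mod dS) / of_nat dW else 0)"
        unfolding phiR_def F_def[symmetric] kapW by simp
    qed
    also have "... = (\<Sum>t<dS. cnj (F t (j mod dS)) * F t (j mod dS) / of_nat dW)"
      by (rule block_sum[OF dS div_lt[OF j]])
    finally show ?thesis .
  qed
  have "(\<Sum>j<dW*dS. \<Sum>x<dW*dS. cnj (\<phi> a j x) * \<phi> a j x) = (\<Sum>j<dW*dS. \<Sum>t<dS. cnj (F t (j mod dS)) * F t (j mod dS) / of_nat dW)"
    by (intro sum.cong refl inner) simp
  also have "... = of_nat dW * (\<Sum>m<dS. \<Sum>t<dS. cnj (F t m) * F t m / of_nat dW)"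
    by (rule mod_sum)
  also have "... = (\<Sum>m<dS. \<Sum>t<dS. cnj (F t m) * F t m)"
    using dW0 by (simp only: sum_divide_distrib[symmetric]) simp
  also have "... = (\<Sum>t<dS. \<Sum>m<dS. F t m * cnj (F t m))" by (subst sum.swap) (simp add: mult.commute)
  also have "... = (\<Sum>t<dS. Hf dW dS \<tau> (a div dS) t t)" by (intro sum.cong refl) (simp add: HF F_def)
  also have "... = 1" by (rule Htr)
  finally show "(\<Sum>j<dW*dS. \<Sum>x<dW*dS. cnj (\<phi> a j x) * \<phi> a j x) = 1" .
qed

lemma N2: "\<forall>x<dW*dS. \<forall>y<dW*dS. (\<Sum>a<dW*dS. \<Sum>j<dW*dS. \<phi> a j x * cnj (\<phi> a j y)) = (if x = y then 1 else 0)"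
proof (intro allI impI)
  fix x y assume xy: "x < dW*dS" "y < dW*dS"
  have xm: "x mod dS < dS" "y mod dS < dS" using dS by auto
  have inner: "(\<Sum>j<dW*dS. \<phi> a j x * cnj (\<phi> a j y)) =
     (if y div dS = x div dS then Hf dW dS \<tau> (a div dS) (x mod dS) (y mod dS) / of_nat dW else 0)" for a
  proof -
    define F where "F = (if a div dS = 0 then B else C)"
    have "(\<Sum>j<dW*dS. \<phi> a j x * cnj (\<phi> a j y)) =
       (\<Sum>j<dW*dS. if j div dS = x div dS then (if y div dS = x div dS then F (x mod dS) (j mod dS) * cnj (F (y mod dS) (j mod dS)) / of_nat dW else 0) else 0)"
    proof (intro sum.cong refl)
      fix j
      have "kap dW * F (x mod dS) (j mod dS) * cnj (kap dW * F (y mod dS) (j mod dS))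
         = (kap dW * cnj (kap dW)) * (F (x mod dS) (j mod dS) * cnj (F (y mod dS) (j mod dS)))" by (simp add: mult_ac)
      then show "\<phi> a j x * cnj (\<phi> a j y) = (if j div dS = x div dS then (if y div dS = x div dS then F (x mod dS) (j mod dS) * cnj (F (y mod dS) (j mod dS)) / of_nat dW else 0) else 0)"
        unfolding phiR_def F_def[symmetric] kapW by auto
    qed
    also have "... = (\<Sum>m<dS. if y div dS = x div dS then F (x mod dS) m * cnj (F (y mod dS) m) / of_nat dW else 0)"
      by (rule block_sum[OF dS div_lt[OF xy(1)]])
    also have "... = (if y div dS = x div dS then Hf dW dS \<tau> (a div dS) (x mod dS) (y mod dS) / of_nat dW else 0)"
      unfolding sum_if_cond HF[OF xm] F_def by (simp add: sum_divide_distrib)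
    finally show ?thesis .
  qed
  have "(\<Sum>a<dW*dS. \<Sum>j<dW*dS. \<phi> a j x * cnj (\<phi> a j y)) =
     (\<Sum>a<dW*dS. (if y div dS = x div dS then Hf dW dS \<tau> (a div dS) (x mod dS) (y mod dS) / of_nat dW else 0))"
    by (simp only: inner)
  also have "... = of_nat dS * (\<Sum>i<dW. (if y div dS = x div dS then Hf dW dS \<tau> i (x mod dS) (y mod dS) / of_nat dW else 0))"
    by (rule div_sum)
  also have "... = (if y div dS = x div dS then of_nat dS * (\<Sum>i<dW. Hf dW dS \<tau> i (x mod dS) (y mod dS)) / of_nat dW else 0)"
    by (simp add: sum_if_cond sum_divide_distrib[symmetric])
  also have "... = (if y div dS = x div dS \<and> x mod dS = y mod dS then 1 else 0)"
    unfolding Hsum[OF xm] using dS dW0 by auto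
  also have "... = (if x = y then 1 else 0)"
    by (metis div_mult_mod_eq)
  finally show "(\<Sum>a<dW*dS. \<Sum>j<dW*dS. \<phi> a j x * cnj (\<phi> a j y)) = (if x = y then 1 else 0)" .
qed

lemma M0: "0 < dW*dS" using dS dW0 by simp

lemma R_ptW:
  assumes s: "\<sigma> \<in> carrier_mat (dW*dS) (dW*dS)" and st: "s < dS" "t < dS"
  shows "ptrace_W dW dS (kraus_apply (RKs (dW*dS) (dW*dS) \<phi>) \<sigma>) $$ (s,t)
     = (\<Sum>i<dW. ptrace_S dW dS \<sigma> $$ (i,i) * Hf dW dS \<tau> i s t)"
proof -
  let ?E = "kraus_apply (RKs (dW*dS) (dW*dS) \<phi>) \<sigma>"
  let ?N = "dW*dS"
  have "ptrace_W dW dS ?E $$ (s,t) = (\<Sum>i<dW. ?E $$ (i*dS+s, i*dS+t))" using st by (simp add: ptW_entry)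
  also have "... = (\<Sum>i<dW. \<Sum>a<?N. \<Sum>j<?N. \<phi> a j (i*dS+s) * \<sigma> $$ (a,a) * cnj (\<phi> a j (i*dS+t)))"
    using st idx_lt[of _ dW s dS] idx_lt[of _ dW t dS] by (intro sum.cong refl) (simp add: R_out[OF M0 s])
  also have "... = (\<Sum>a<?N. \<Sum>j<?N. \<Sum>i<dW. \<phi> a j (i*dS+s) * \<sigma> $$ (a,a) * cnj (\<phi> a j (i*dS+t)))"
    by (subst sum.swap) (intro sum.cong refl sum.swap)
  also have "... = (\<Sum>a<?N. \<Sum>j<?N. \<sigma> $$ (a,a) * ((if a div dS = 0 then B else C) s (j mod dS) * cnj ((if a div dS = 0 then B else C) t (j mod dS)) / of_nat dW))"
  proof (intro sum.cong refl)
    fix a j assume j: "j \<in> {..<?N}"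
    have "(\<Sum>i<dW. \<phi> a j (i*dS+s) * \<sigma> $$ (a,a) * cnj (\<phi> a j (i*dS+t))) =
      (\<Sum>i<dW. if i = j div dS then \<sigma> $$ (a,a) * ((if a div dS = 0 then B else C) s (j mod dS) * cnj ((if a div dS = 0 then B else C) t (j mod dS)) / of_nat dW) else 0)"
    proof (intro sum.cong refl)
      fix i
      have "kap dW * X * S * cnj (kap dW * Y) = S * (X * cnj Y / of_nat dW)" for X Y S
      proof -
        have "kap dW * X * S * cnj (kap dW * Y) = (kap dW * cnj (kap dW)) * (S * (X * cnj Y))" by (simp add: mult_ac)
        then show ?thesis unfolding kapW by simp
      qed
      then show "\<phi> a j (i*dS+s) * \<sigma> $$ (a,a) * cnj (\<phi> a j (i*dS+t)) = (if i = j div dS then \<sigma> $$ (a,a) * ((if a div dS = 0 then B else C) s (j mod dS) * cnj ((if a div dS = 0 then B else C) t (j mod dS)) / of_nat dW) else 0)"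
        unfolding phiR_def using st by auto
    qed
    also have "... = \<sigma> $$ (a,a) * ((if a div dS = 0 then B else C) s (j mod dS) * cnj ((if a div dS = 0 then B else C) t (j mod dS)) / of_nat dW)"
      using div_lt[of j dW dS] j by simp
    finally show "(\<Sum>i<dW. \<phi> a j (i*dS+s) * \<sigma> $$ (a,a) * cnj (\<phi> a j (i*dS+t))) =
       \<sigma> $$ (a,a) * ((if a div dS = 0 then B else C) s (j mod dS) * cnj ((if a div dS = 0 then B else C) t (j mod dS)) / of_nat dW)" .
  qed
  also have "... = (\<Sum>a<?N. \<sigma> $$ (a,a) * Hf dW dS \<tau> (a div dS) s t)"
  proof (intro sum.cong refl)
    fix a
    have "(\<Sum>j<?N. \<sigma> $$ (a,a) * ((if a div dS = 0 then B else C) s (j mod dS) * cnj ((if a div dS = 0 then B else C) t (j mod dS)) / of_nat dW))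
       = of_nat dW * (\<Sum>m<dS. \<sigma> $$ (a,a) * ((if a div dS = 0 then B else C) s m * cnj ((if a div dS = 0 then B else C) t m) / of_nat dW))"
      by (rule mod_sum)
    also have "... = \<sigma> $$ (a,a) * (\<Sum>m<dS. (if a div dS = 0 then B else C) s m * cnj ((if a div dS = 0 then B else C) t m))"
      using dW0 by (simp add: sum_distrib_left[symmetric] sum_divide_distrib[symmetric])
    also have "... = \<sigma> $$ (a,a) * Hf dW dS \<tau> (a div dS) s t" using HF[OF st] by simp
    finally show "(\<Sum>j<?N. \<sigma> $$ (a,a) * ((if a div dS = 0 then B else C) s (j mod dS) * cnj ((if a div dS = 0 then B else C) t (j mod dS)) / of_nat dW))
       = \<sigma> $$ (a,a) * Hf dW dS \<tau> (a div dS) s t" .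
  qed
  also have "... = (\<Sum>i<dW. \<Sum>m<dS. \<sigma> $$ (i*dS+m, i*dS+m) * Hf dW dS \<tau> ((i*dS+m) div dS) s t)"
    by (rule sum_split_mult)
  also have "... = (\<Sum>i<dW. ptrace_S dW dS \<sigma> $$ (i,i) * Hf dW dS \<tau> i s t)"
    by (intro sum.cong refl) (simp add: ptS_entry sum_distrib_right)
  finally show ?thesis .
qed

end

lemma density1: "density 1 \<tau> \<Longrightarrow> \<tau> = 1\<^sub>m 1"
proof -
  assume d: "density 1 \<tau>"
  then have c: "\<tau> \<in> carrier_mat 1 1" and t: "(\<Sum>i<1. \<tau> $$ (i,i)) = 1" unfolding density_iff by auto
  show ?thesis
  proof (rule eq_matI)
    fix i j assume "i < dim_row (1\<^sub>m 1)" "j < dim_col (1\<^sub>m 1)"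
    then show "\<tau> $$ (i,j) = 1\<^sub>m 1 $$ (i,j)" using t by simp
  qed (use c in auto)
qed

lemma replace_reach:
  assumes dS: "0 < dS" and dSW: "dS \<le> dW" and d: "density dS \<tau>"
  shows "\<exists>E. unital_cptp (dW*dS) E \<and>
     (\<forall>\<sigma>\<in>currency_set dW dS 1. E \<sigma> \<in> Omega dW dS \<and> ptrace_W dW dS (E \<sigma>) = \<tau>)"
proof (cases "2 \<le> dW")
  case True
  note dW2 = True
  obtain B where HB: "\<forall>p<dS. \<forall>q<dS. \<tau> $$ (p,q) = (\<Sum>m<dS. B p m * cnj (B q m))"
    using factor_psd[OF density_psdf[OF d]] by blast
  obtain C where HC: "\<forall>p<dS. \<forall>q<dS. Dmat dW dS \<tau> p q = (\<Sum>m<dS. C p m * cnj (C q m))"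
    using factor_psd[OF Dmat_psdf[OF d dS dSW dW2]] by blast
  note n1 = N1[OF dS dW2 dSW d HB HC] and n2 = N2[OF dS dW2 dSW d HB HC]
  note m0 = M0[OF dS dW2 dSW d HB HC]
  define E where "E = kraus_apply (RKs (dW*dS) (dW*dS) (phiR dW dS B C))"
  have un: "unital_cptp (dW*dS) E" unfolding E_def by (rule R_unital[OF m0 n1 n2 m0])
  have "E \<sigma> \<in> Omega dW dS \<and> ptrace_W dW dS (E \<sigma>) = \<tau>" if s: "\<sigma> \<in> currency_set dW dS 1" for \<sigma>
  proof -
    have sO: "\<sigma> \<in> Omega dW dS" and p: "ptrace_S dW dS \<sigma> = proj_norm dW 1"
      using s unfolding currency_set_def by auto
    have c: "\<sigma> \<in> carrier_mat (dW*dS) (dW*dS)" by (rule Omega_carrier[OF sO])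
    have "E \<sigma> \<in> Omega dW dS" unfolding E_def Omega_def
      using kraus_density[OF RKs_carrier R_TP[OF m0 n1 n2]] sO unfolding Omega_def by auto
    moreover have "ptrace_W dW dS (E \<sigma>) = \<tau>"
    proof (rule eq_matI)
      fix s t assume "s < dim_row \<tau>" "t < dim_col \<tau>"
      then have st: "s < dS" "t < dS" using d unfolding density_iff by auto
      have "ptrace_W dW dS (E \<sigma>) $$ (s,t) = (\<Sum>i<dW. ptrace_S dW dS \<sigma> $$ (i,i) * Hf dW dS \<tau> i s t)"
        unfolding E_def by (rule R_ptW[OF dS dW2 dSW d HB HC c st])
      also have "... = (\<Sum>i<dW. if i = 0 then \<tau> $$ (s,t) else 0)"
        unfolding p proj_norm_def Hf_def by (intro sum.cong refl) auto
      also have "... = \<tau> $$ (s,t)" using dW2 by simp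
      finally show "ptrace_W dW dS (E \<sigma>) $$ (s,t) = \<tau> $$ (s,t)" .
    qed (use d in \<open>auto simp: ptrace_W_def density_iff\<close>)
    ultimately show ?thesis by simp
  qed
  then show ?thesis using un by blast
next
  case False
  then have dW1: "dW = 1" "dS = 1" using dS dSW by auto
  define E where "E = kraus_apply [1\<^sub>m (dW*dS)]"
  have "E \<sigma> \<in> Omega dW dS \<and> ptrace_W dW dS (E \<sigma>) = \<tau>" if s: "\<sigma> \<in> currency_set dW dS 1" for \<sigma>
  proof -
    have sO: "\<sigma> \<in> Omega dW dS" using s unfolding currency_set_def by auto
    have e: "E \<sigma> = \<sigma>" unfolding E_def by (rule id_apply[OF Omega_carrier[OF sO]])
    have "density dS (ptrace_W dW dS \<sigma>)" using ptrace_W_density[OF dS] sO unfolding Omega_def by auto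
    then have "ptrace_W dW dS \<sigma> = 1\<^sub>m 1" using dW1 density1 by simp
    moreover have "\<tau> = 1\<^sub>m 1" using d dW1 density1 by simp
    ultimately show ?thesis using e sO by simp
  qed
  then show ?thesis using id_unital unfolding E_def by blast
qed

lemma C_nonempty:
  assumes "0 < dS" "1 \<le> k" "k \<le> dW"
  shows "tens dW dS k (mixS dS) \<in> currency_set dW dS k"
  by (rule tens_in_C[OF assms mixS_density[OF assms(1)]])

lemma C_sub: "currency_set dW dS k \<subseteq> Omega dW dS"
  unfolding currency_set_def by auto

lemma reach_CC:
  assumes dS: "0 < dS" and k: "1 \<le> k" "k \<le> dW" "1 \<le> k'" "k' \<le> dW"
  shows "reach dW dS (currency_set dW dS k) (currency_set dW dS k') \<longleftrightarrow> k \<le> k'"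
proof
  assume "reach dW dS (currency_set dW dS k) (currency_set dW dS k')"
  then show "k \<le> k'" using no_reach_down[OF dS k(3) _ k(2)] k by (metis not_le)
next
  assume kk: "k \<le> k'"
  have k1: "1 \<le> k'" using k by simp
  show "reach dW dS (currency_set dW dS k) (currency_set dW dS k')"
    using G_maps_C[OF dS k(1) kk k(4)] G_unital[OF dS k1 k(4)] unfolding reach_def by blast
qed

lemma reach_OC:
  assumes dS: "0 < dS" and k: "1 \<le> k'" "k' \<le> dW"
  shows "reach dW dS (Omega dW dS) (currency_set dW dS k') \<longleftrightarrow> k' = dW"
proof
  assume "reach dW dS (Omega dW dS) (currency_set dW dS k')"
  then show "k' = dW" using no_reach_Omega[OF dS k(1)] k by (metis le_neq_implies_less)
next
  assume kk: "k' = dW"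
  have dW: "1 \<le> dW" using k by simp
  show "reach dW dS (Omega dW dS) (currency_set dW dS k')"
    using G_maps_Omega[OF dS dW] G_unital[OF dS dW order.refl] kk unfolding reach_def by blast
qed

lemma reach_XO: "X \<subseteq> Omega dW dS \<Longrightarrow> reach dW dS X (Omega dW dS)"
  by (rule reach_subset) auto

lemma tens_V:
  assumes "0 < dS" "1 \<le> k" "k \<le> dW" "density dS \<tau>"
  shows "tens dW dS k \<tau> \<in> currency_set dW dS k" "ptrace_W dW dS (tens dW dS k \<tau>) = \<tau>"
  using tens_in_C[OF assms] ptrace_W_tens[OF assms] by auto

lemma log_cmp:
  assumes "1 \<le> a" "1 \<le> b"
  shows "(log 2 (real dW) - log 2 (real a) \<le> log 2 (real dW) - log 2 (real b)) \<longleftrightarrow> b \<le> a"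
  using assms by simp

theorem mainTheorem14:
  fixes dW dS :: nat
  assumes "dS \<ge> 1" and "dW \<ge> dS"
  shows "is_currency dW dS (currency_family dW dS) (target_family dW dS) \<and>
         (\<exists>Val. is_value_function dW dS (currency_family dW dS) Val \<and>
                (\<forall>k\<in>{1..dW}. Val (currency_set dW dS k) = log 2 (real dW) - log 2 (real k)) \<and>
                Val (Omega dW dS) = 0) \<and>
         is_independent dW dS (currency_family dW dS) (target_family dW dS)"
proof -
  have dS: "0 < dS" using assms(1) by simp
  have dW1: "1 \<le> dW" using assms by simp
  have dSW: "dS \<le> dW" using assms by simp
  let ?C = "currency_family dW dS"
  let ?S = "target_family dW dS"
  let ?O = "Omega dW dS"
  let ?c = "currency_set dW dS"
  have Cmem: "X \<in> ?C \<longleftrightarrow> X = ?O \<or> (\<exists>k\<in>{1..dW}. X = ?c k)" for X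
    unfolding currency_family_def by auto
  have Smem: "V \<in> ?S \<longleftrightarrow> (\<exists>VS. V = {\<sigma> \<in> ?O. ptrace_W dW dS \<sigma> \<in> VS} \<and> VS \<noteq> {} \<and> (\<forall>\<tau>\<in>VS. density dS \<tau>))" for V
    unfolding target_family_def by auto
  have mixd: "density dS (mixS dS)" by (rule mixS_density[OF dS])
  have specC: "\<forall>X\<in>?C. is_spec dW dS X"
  proof
    fix X assume "X \<in> ?C"
    then consider "X = ?O" | k where "k \<in> {1..dW}" "X = ?c k" unfolding Cmem by blast
    then show "is_spec dW dS X"
    proof cases
      case 1
      then show ?thesis unfolding is_spec_def using C_nonempty[OF dS order.refl dW1] C_sub by blast
    next
      case 2
      then show ?thesis unfolding is_spec_def using C_nonempty[OF dS] C_sub by fastforce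
    qed
  qed
  have specS: "\<forall>V\<in>?S. is_spec dW dS V"
  proof
    fix V assume "V \<in> ?S"
    then obtain VS where V: "V = {\<sigma> \<in> ?O. ptrace_W dW dS \<sigma> \<in> VS}" "VS \<noteq> {}" "\<forall>\<tau>\<in>VS. density dS \<tau>"
      unfolding Smem by blast
    then obtain \<tau> where t: "\<tau> \<in> VS" by blast
    then have "tens dW dS 1 \<tau> \<in> V" using V tens_V[OF dS order.refl dW1] C_sub by fastforce
    then show "is_spec dW dS V" unfolding is_spec_def V by auto
  qed
  have OinS: "?O \<in> ?S"
  proof -
    have "?O = {\<sigma> \<in> ?O. ptrace_W dW dS \<sigma> \<in> {\<tau>. density dS \<tau>}}"
      using ptrace_W_density[OF dS] unfolding Omega_def by auto
    moreover have "{\<tau>. density dS \<tau>} \<noteq> {}" using mixd by auto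
    ultimately show ?thesis unfolding Smem by blast
  qed
  have rCC: "\<And>k k'. k \<in> {1..dW} \<Longrightarrow> k' \<in> {1..dW} \<Longrightarrow> reach dW dS (?c k) (?c k') \<longleftrightarrow> k \<le> k'"
    using reach_CC[OF dS] by auto
  have rOC: "\<And>k'. k' \<in> {1..dW} \<Longrightarrow> reach dW dS ?O (?c k') \<longleftrightarrow> k' = dW"
    using reach_OC[OF dS] by auto
  have rXO: "\<And>X. X \<in> ?C \<Longrightarrow> reach dW dS X ?O"
    using specC reach_XO unfolding is_spec_def by blast
  have order: "\<forall>X\<in>?C. \<forall>Y\<in>?C. reach dW dS X Y \<or> reach dW dS Y X"
  proof (intro ballI)
    fix X Y assume X: "X \<in> ?C" and Y: "Y \<in> ?C"
    show "reach dW dS X Y \<or> reach dW dS Y X"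
    proof (cases "Y = ?O")
      case True then show ?thesis using rXO[OF X] by simp
    next
      case False
      then obtain k' where k': "k' \<in> {1..dW}" "Y = ?c k'" using Y unfolding Cmem by blast
      show ?thesis
      proof (cases "X = ?O")
        case True then show ?thesis using rXO[OF Y] by simp
      next
        case False
        then obtain k where k: "k \<in> {1..dW}" "X = ?c k" using X unfolding Cmem by blast
        show ?thesis using rCC[OF k(1) k'(1)] rCC[OF k'(1) k(1)] k k' by auto
      qed
    qed
  qed
  have univ: "\<forall>V\<in>?S. \<exists>X\<in>?C. \<exists>Y\<in>?C. reach dW dS X V \<and> reach dW dS V Y"
  proof
    fix V assume VS: "V \<in> ?S"
    then obtain VS where V: "V = {\<sigma> \<in> ?O. ptrace_W dW dS \<sigma> \<in> VS}" "VS \<noteq> {}" "\<forall>\<tau>\<in>VS. density dS \<tau>"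
      unfolding Smem by blast
    then obtain \<tau> where t: "\<tau> \<in> VS" by blast
    obtain E where E: "unital_cptp (dW*dS) E"
      "\<forall>\<sigma>\<in>?c 1. E \<sigma> \<in> ?O \<and> ptrace_W dW dS (E \<sigma>) = \<tau>"
      using replace_reach[OF dS dSW] V(3) t by blast
    have "reach dW dS (?c 1) V" unfolding reach_def V using E t by auto
    moreover have "?c 1 \<in> ?C" unfolding Cmem using dW1 by auto
    moreover have "reach dW dS V ?O" using specS VS reach_XO unfolding is_spec_def by blast
    moreover have "?O \<in> ?C" unfolding Cmem by simp
    ultimately show "\<exists>X\<in>?C. \<exists>Y\<in>?C. reach dW dS X V \<and> reach dW dS V Y" by blast
  qed
  have cur: "is_currency dW dS ?C ?S"
    unfolding is_currency_def using specC specS order OinS univ Cmem by blast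
  define r where "r X = (LEAST k. 1 \<le> k \<and> k \<le> dW \<and> reach dW dS X (?c k))" for X
  define Val where "Val X = log 2 (real dW) - log 2 (real (r X))" for X
  have rC: "r (?c k) = k" if k: "k \<in> {1..dW}" for k
    unfolding r_def
  proof (rule Least_equality)
    show "1 \<le> k \<and> k \<le> dW \<and> reach dW dS (?c k) (?c k)" using k rCC[OF k k] by auto
  next
    fix y assume "1 \<le> y \<and> y \<le> dW \<and> reach dW dS (?c k) (?c y)"
    then show "k \<le> y" using rCC[OF k, of y] by auto
  qed
  have rO: "r ?O = dW"
    unfolding r_def
  proof (rule Least_equality)
    show "1 \<le> dW \<and> dW \<le> dW \<and> reach dW dS ?O (?c dW)" using dW1 rOC[of dW] by auto
  next
    fix y assume "1 \<le> y \<and> y \<le> dW \<and> reach dW dS ?O (?c y)"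
    then show "dW \<le> y" using rOC[of y] by auto
  qed
  have ValC: "\<forall>k\<in>{1..dW}. Val (?c k) = log 2 (real dW) - log 2 (real k)"
    unfolding Val_def using rC by simp
  have ValO: "Val ?O = 0" unfolding Val_def rO by simp
  have vf: "is_value_function dW dS ?C Val"
    unfolding is_value_function_def
  proof (intro conjI ballI)
    fix X assume "X \<in> ?C"
    then consider "X = ?O" | k where "k \<in> {1..dW}" "X = ?c k" unfolding Cmem by blast
    then show "Val X \<ge> 0"
    proof cases
      case 1 then show ?thesis using ValO by simp
    next
      case 2 then show ?thesis using ValC by simp
    qed
  next
    fix X Y assume X: "X \<in> ?C" and Y: "Y \<in> ?C"
    show "Val Y \<ge> Val X \<longleftrightarrow> reach dW dS Y X"
    proof (cases "X = ?O")
      case True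
      note XO = True
      show ?thesis
      proof (cases "Y = ?O")
        case True then show ?thesis using XO rXO[OF Y] by simp
      next
        case False
        then obtain b where b: "b \<in> {1..dW}" "Y = ?c b" using Y unfolding Cmem by blast
        then show ?thesis using XO ValC ValO rXO[OF Y] by simp
      qed
    next
      case False
      then obtain a where a: "a \<in> {1..dW}" "X = ?c a" using X unfolding Cmem by blast
      show ?thesis
      proof (cases "Y = ?O")
        case True
        then show ?thesis using a ValC ValO rOC[OF a(1)] by auto
      next
        case False
        then obtain b where b: "b \<in> {1..dW}" "Y = ?c b" using Y unfolding Cmem by blast
        then show ?thesis using a ValC rCC[OF b(1) a(1)] by auto
      qed
    qed
  next
    show "Val ?O = 0" by (rule ValO)
  qed
  have ind1: "\<forall>X\<in>?C. \<forall>V\<in>?S. X \<inter> V \<noteq> {}"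
  proof (intro ballI)
    fix X V assume X: "X \<in> ?C" and VS: "V \<in> ?S"
    then obtain VS where V: "V = {\<sigma> \<in> ?O. ptrace_W dW dS \<sigma> \<in> VS}" "VS \<noteq> {}" "\<forall>\<tau>\<in>VS. density dS \<tau>"
      unfolding Smem by blast
    then obtain \<tau> where t: "\<tau> \<in> VS" by blast
    from X consider "X = ?O" | k where "k \<in> {1..dW}" "X = ?c k" unfolding Cmem by blast
    then show "X \<inter> V \<noteq> {}"
    proof cases
      case 1
      then have "tens dW dS 1 \<tau> \<in> X \<inter> V" using V t tens_V[OF dS order.refl dW1] C_sub by fastforce
      then show ?thesis by blast
    next
      case 2
      then have "tens dW dS k \<tau> \<in> X \<inter> V" using V t tens_V[OF dS] C_sub by fastforce
      then show ?thesis by blast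
    qed
  qed
  have ind2: "\<forall>X\<in>?C. \<forall>Y\<in>?C. reach dW dS X Y \<longrightarrow> (\<forall>V\<in>?S. reach dW dS (X \<inter> V) (Y \<inter> V))"
  proof (intro ballI impI)
    fix X Y V assume X: "X \<in> ?C" and Y: "Y \<in> ?C" and r: "reach dW dS X Y" and VS: "V \<in> ?S"
    then obtain VS where V: "V = {\<sigma> \<in> ?O. ptrace_W dW dS \<sigma> \<in> VS}"
      unfolding Smem by blast
    show "reach dW dS (X \<inter> V) (Y \<inter> V)"
    proof (cases "Y = ?O")
      case True
      then show ?thesis using V by (intro reach_subset) auto
    next
      case False
      then obtain k' where k': "k' \<in> {1..dW}" "Y = ?c k'" using Y unfolding Cmem by blast
      have G: "unital_cptp (dW*dS) (kraus_apply (GKs dW dS k'))" using G_unital[OF dS] k' by auto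
      show ?thesis
      proof (cases "X = ?O")
        case True
        then have kW: "k' = dW" using r k' rOC by auto
        have "\<forall>\<sigma>\<in>X \<inter> V. kraus_apply (GKs dW dS k') \<sigma> \<in> Y \<inter> V"
          using G_maps_Omega[OF dS dW1] True kW k' V C_sub by fastforce
        then show ?thesis using G unfolding reach_def by blast
      next
        case False
        then obtain k where k: "k \<in> {1..dW}" "X = ?c k" using X unfolding Cmem by blast
        then have kk: "k \<le> k'" using r k' rCC by auto
        have "\<forall>\<sigma>\<in>X \<inter> V. kraus_apply (GKs dW dS k') \<sigma> \<in> Y \<inter> V"
        proof
          fix \<sigma> assume s: "\<sigma> \<in> X \<inter> V"
          have "kraus_apply (GKs dW dS k') \<sigma> \<in> ?c k' \<and> ptrace_W dW dS (kraus_apply (GKs dW dS k') \<sigma>) = ptrace_W dW dS \<sigma>"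
            using G_maps_C[OF dS _ kk] k k' s by auto
          then show "kraus_apply (GKs dW dS k') \<sigma> \<in> Y \<inter> V" using s k' V C_sub by auto
        qed
        then show ?thesis using G unfolding reach_def by blast
      qed
    qed
  qed
  have ind: "is_independent dW dS ?C ?S" unfolding is_independent_def using ind1 ind2 by blast
  show ?thesis using cur vf ValC ValO ind by blast
qed

end
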